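(* Let $1<p<2$ and let $\{T_{-k}\}_{k\in\mathbb Z_+}$ be a sequence of $L^p$-tempered distributions on $\mathfrak X$ such that (1) $\mathcal L T_{-k}=\lambda T_{-k+1}$ for all $k\ge1$, for some nonzero $\lambda\in\mathbb C$, and (2) there exist $M>0$ and a fixed seminorm $\nu=\nu_m$ ($m\in\mathbb N$) of $\mathcal S_p(\mathfrak X)$ such that $|\langle T_{-k},\phi\rangle|\le M\nu(\phi)$ for all $\phi\in\mathcal S_p(\mathfrak X)$ and all $k\in\mathbb Z_+$. Then: (a) if $|\lambda|=\gamma(\tau/2+i\delta_{p'})$, then $\mathcal L T_0=|\lambda|T_0$; (b) if $|\lambda|>\gamma(\tau/2+i\delta_{p'})$, then $T_{-k}=0$ for all $k\in\mathbb Z_+$; (c) if $\gamma(\tau/2+i\delta_{p'})>|\lambda|>\gamma(i\delta_{p'})$, then there exists a sequence $\{T_{-k}\}_{k\in\mathbb Z_+}$ satisfying (1) and (2) for which $T_0$ is not an eigendistribution of $\mathcal L$.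
   Context: $\mathfrak X$ is a homogeneous tree of degree $q+1$, $q\ge2$, identified with its vertex set, with graph distance $d$, base vertex $o$, and $|x|=d(o,x)$. The Laplacian is $\mathcal L f(x)=f(x)-\frac{1}{q+1}\sum_{y:d(x,y)=1}f(y)$. $\tau=2\pi/\log q$, $\gamma(z)=1-\frac{q^{1/2+iz}+q^{1/2-iz}}{q+1}$, $p'=p/(p-1)$, $\delta_r=\frac1r-\frac12$; $\mathbb Z_+$ is the set of nonnegative integers. For $1<p\le2$, $\mathcal S_p(\mathfrak X)$ is the Fréchet space of functions $f$ on $\mathfrak X$ with $\nu_m(f)=\sup_{x\in\mathfrak X}(1+|x|)^m q^{|x|/p}|f(x)|<\infty$ for all $m\in\mathbb N$. An $L^p$-tempered distribution is a linear functional $T$ on $\mathcal S_p(\mathfrak X)$ with $\langle T,f_n\rangle\to0$ whenever $\nu_m(f_n)\to0$ for all $m$. The Laplacian acts on distributions by $\langle\mathcal L T,\phi\rangle=\langle T,\mathcal L\phi\rangle$; $T$ is an eigendistribution of $\mathcal L$ if $\mathcal LT=cT$ for some $c\in\mathbb C$. *)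

theory Defs
  imports Complex_Main
begin

text \<open>Concrete model of the homogeneous tree of degree q+1: vertices are finite
  words xs (root o = []) with first letter in {0..q} and later letters in {0..q-1};
  the neighbours of xs are its parent (butlast) and its children xs @ [a].\<close>

definition tree_vertices :: "nat \<Rightarrow> nat list set" where
  "tree_vertices q = {xs. \<forall>i<length xs. (if i = 0 then xs ! i < q + 1 else xs ! i < q)}"

definition tree_adj :: "nat list \<Rightarrow> nat list \<Rightarrow> bool" where
  "tree_adj x y \<longleftrightarrow> (\<exists>a. y = x @ [a]) \<or> (\<exists>a. x = y @ [a])"

definition tree_neighbors :: "nat \<Rightarrow> nat list \<Rightarrow> nat list set" where
  "tree_neighbors q x = {y \<in> tree_vertices q. tree_adj x y}"

fun lcp_len :: "nat list \<Rightarrow> nat list \<Rightarrow> nat" where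
  "lcp_len (a # xs) (b # ys) = (if a = b then Suc (lcp_len xs ys) else 0)"
| "lcp_len _ _ = 0"

definition tree_dist :: "nat list \<Rightarrow> nat list \<Rightarrow> nat" where
  "tree_dist x y = length x + length y - 2 * lcp_len x y"

definition tree_norm :: "nat list \<Rightarrow> nat" where
  "tree_norm x = tree_dist [] x"

definition weight :: "nat \<Rightarrow> real \<Rightarrow> nat \<Rightarrow> nat list \<Rightarrow> real" where
  "weight q p m x = (1 + real (tree_norm x)) ^ m * real q powr (real (tree_norm x) / p)"

definition nu :: "nat \<Rightarrow> real \<Rightarrow> nat \<Rightarrow> (nat list \<Rightarrow> complex) \<Rightarrow> real" where
  "nu q p m f = (SUP x\<in>tree_vertices q. weight q p m x * cmod (f x))"

definition Sp :: "nat \<Rightarrow> real \<Rightarrow> (nat list \<Rightarrow> complex) set" where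
  "Sp q p = {f. (\<forall>x. x \<notin> tree_vertices q \<longrightarrow> f x = 0) \<and>
       (\<forall>m. bdd_above ((\<lambda>x. weight q p m x * cmod (f x)) ` tree_vertices q))}"

definition tempered :: "nat \<Rightarrow> real \<Rightarrow> ((nat list \<Rightarrow> complex) \<Rightarrow> complex) \<Rightarrow> bool" where
  "tempered q p T \<longleftrightarrow>
     (\<forall>f\<in>Sp q p. \<forall>g\<in>Sp q p. \<forall>c. T (\<lambda>x. f x + g x) = T f + T g \<and> T (\<lambda>x. c * f x) = c * T f) \<and>
     (\<forall>F. (\<forall>n. F n \<in> Sp q p) \<and> (\<forall>m. (\<lambda>n. nu q p m (F n)) \<longlonglongrightarrow> 0)
          \<longrightarrow> (\<lambda>n. T (F n)) \<longlonglongrightarrow> 0)"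

definition lap :: "nat \<Rightarrow> (nat list \<Rightarrow> complex) \<Rightarrow> nat list \<Rightarrow> complex" where
  "lap q f x = (if x \<in> tree_vertices q
      then f x - (1 / (of_nat q + 1)) * (\<Sum>y\<in>tree_neighbors q x. f y) else 0)"

definition eigendist :: "nat \<Rightarrow> real \<Rightarrow> ((nat list \<Rightarrow> complex) \<Rightarrow> complex) \<Rightarrow> bool" where
  "eigendist q p T \<longleftrightarrow> (\<exists>c. \<forall>\<phi>\<in>Sp q p. T (lap q \<phi>) = c * T \<phi>)"

text \<open>Conditions (1) and (2) on a sequence T k = T_{-k} of L^p-tempered distributions.\<close>
definition seq_cond :: "nat \<Rightarrow> real \<Rightarrow> complex \<Rightarrow> (nat \<Rightarrow> (nat list \<Rightarrow> complex) \<Rightarrow> complex) \<Rightarrow> bool" where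
  "seq_cond q p lam T \<longleftrightarrow>
     (\<forall>k. tempered q p (T k)) \<and>
     (\<forall>k\<ge>1. \<forall>\<phi>\<in>Sp q p. T k (lap q \<phi>) = lam * T (k - 1) \<phi>) \<and>
     (\<exists>M>0. \<exists>m. \<forall>\<phi>\<in>Sp q p. \<forall>k. cmod (T k \<phi>) \<le> M * nu q p m \<phi>)"

definition tau :: "nat \<Rightarrow> real" where
  "tau q = 2 * pi / ln (real q)"

definition gamma_fn :: "nat \<Rightarrow> complex \<Rightarrow> complex" where
  "gamma_fn q z = 1 - (exp ((1/2 + \<i> * z) * of_real (ln (real q)))
                     + exp ((1/2 - \<i> * z) * of_real (ln (real q)))) / (of_nat q + 1)"

definition conj_exp :: "real \<Rightarrow> real" where
  "conj_exp p = p / (p - 1)"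

definition delta :: "real \<Rightarrow> real" where
  "delta r = 1 / r - 1 / 2"

end

theory Submission
  imports Defs "HOL-Real_Asymp.Real_Asymp"
begin

lemma tree_norm_len: "tree_norm x = length x"
  by (simp add: tree_norm_def tree_dist_def)

definition lmt :: "nat \<Rightarrow> nat list \<Rightarrow> nat" where
  "lmt q x = (if x = [] then q + 1 else q)"

lemma snoc_in_V: "(x @ [a] \<in> tree_vertices q) \<longleftrightarrow> x \<in> tree_vertices q \<and> a < lmt q x"
proof
  assume h: "x @ [a] \<in> tree_vertices q"
  have "x \<in> tree_vertices q" unfolding tree_vertices_def
  proof (intro CollectI allI impI)
    fix i assume "i < length x"
    with h have "(if i = 0 then (x@[a]) ! i < q + 1 else (x@[a]) ! i < q)"
      unfolding tree_vertices_def by auto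
    thus "(if i = 0 then x ! i < q + 1 else x ! i < q)" using \<open>i < length x\<close> by (simp add: nth_append split: if_splits)
  qed
  moreover have "a < lmt q x"
  proof -
    have "if length x = 0 then (x@[a]) ! length x < q + 1 else (x@[a]) ! length x < q"
      using h unfolding tree_vertices_def by auto
    then show ?thesis unfolding lmt_def by (auto split: if_splits)
  qed
  ultimately show "x \<in> tree_vertices q \<and> a < lmt q x" by simp
next
  assume h: "x \<in> tree_vertices q \<and> a < lmt q x"
  show "x @ [a] \<in> tree_vertices q" unfolding tree_vertices_def
  proof (intro CollectI allI impI)
    fix i assume i: "i < length (x @ [a])"
    show "(if i = 0 then (x@[a]) ! i < q + 1 else (x@[a]) ! i < q)"
    proof (cases "i < length x")
      case True
      then show ?thesis using h unfolding tree_vertices_def by (auto simp: nth_append)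
    next
      case False
      then have "i = length x" using i by simp
      then show ?thesis using h unfolding lmt_def by (auto simp: nth_append)
    qed
  qed
qed

lemma butlast_in_V: assumes "x \<in> tree_vertices q" shows "butlast x \<in> tree_vertices q"
  unfolding tree_vertices_def
proof (intro CollectI allI impI)
  have x: "\<forall>i<length x. if i = 0 then x ! i < q + 1 else x ! i < q" using assms unfolding tree_vertices_def by simp
  fix i assume i: "i < length (butlast x)"
  then have "i < length x" by simp
  with x have "if i = 0 then x ! i < q + 1 else x ! i < q" by blast
  then show "if i = 0 then butlast x ! i < q + 1 else butlast x ! i < q" using i by (simp add: nth_butlast split: if_splits)
qed

lemma nbrs_eq: "x \<in> tree_vertices q \<Longrightarrow>
   tree_neighbors q x = (if x = [] then {} else {butlast x}) \<union> (\<lambda>a. x @ [a]) ` {..<lmt q x}"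
proof (intro set_eqI iffI)
  assume xV: "x \<in> tree_vertices q"
  fix y assume "y \<in> tree_neighbors q x"
  then have yV: "y \<in> tree_vertices q" and adj: "(\<exists>a. y = x @ [a]) \<or> (\<exists>a. x = y @ [a])"
    unfolding tree_neighbors_def tree_adj_def by auto
  from adj show "y \<in> (if x = [] then {} else {butlast x}) \<union> (\<lambda>a. x @ [a]) ` {..<lmt q x}"
  proof
    assume "\<exists>a. y = x @ [a]"
    then obtain a where a: "y = x @ [a]" by blast
    with yV have "a < lmt q x" by (simp add: snoc_in_V)
    with a show ?thesis by auto
  next
    assume "\<exists>a. x = y @ [a]"
    then obtain a where a: "x = y @ [a]" by blast
    then show ?thesis by auto
  qed
next
  assume xV: "x \<in> tree_vertices q"
  fix y assume y: "y \<in> (if x = [] then {} else {butlast x}) \<union> (\<lambda>a. x @ [a]) ` {..<lmt q x}"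
  show "y \<in> tree_neighbors q x"
  proof (cases "y \<in> (\<lambda>a. x @ [a]) ` {..<lmt q x}")
    case True
    then obtain a where a: "a < lmt q x" "y = x @ [a]" by auto
    then show ?thesis using xV unfolding tree_neighbors_def tree_adj_def by (auto simp: snoc_in_V)
  next
    case False
    with y have "x \<noteq> []" "y = butlast x" by (auto split: if_splits)
    then have "x = y @ [last x]" by simp
    then show ?thesis using xV \<open>y = butlast x\<close> butlast_in_V unfolding tree_neighbors_def tree_adj_def by auto
  qed
qed

lemma nbrs_sum: assumes "x \<in> tree_vertices q"
  shows "(\<Sum>y\<in>tree_neighbors q x. f y) = (if x = [] then 0 else f (butlast x)) + (\<Sum>a<lmt q x. f (x @ [a]))"
proof -
  have disj: "(if x = [] then {} else {butlast x}) \<inter> (\<lambda>a. x @ [a]) ` {..<lmt q x} = {}"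
    by (auto dest: arg_cong[of _ _ length])
  have inj: "inj_on (\<lambda>a. x @ [a]) {..<lmt q x}" by (auto simp: inj_on_def)
  show ?thesis using assms
    by (simp add: nbrs_eq sum.union_disjoint[OF _ _ disj] sum.reindex[OF inj])
qed


locale tp =
  fixes q :: nat and p :: real
  assumes q2: "q \<ge> 2" and p1: "1 < p" and p2: "p < 2"
begin

abbreviation V where "V \<equiv> tree_vertices q"
abbreviation Q where "Q \<equiv> real q"

definition G :: "nat list \<Rightarrow> real" where
  "G x = Q powr (- real (length x) / p)"

definition g1 :: real where
  "g1 = (Q powr (1/p) + Q powr (1 - 1/p)) / (Q + 1)"

definition gam :: real where "gam = 1 + g1"

lemma Q_gt1: "Q > 1" using q2 by simp
lemma p_pos: "p > 0" using p1 by simp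

lemma g1_pos: "g1 > 0" unfolding g1_def using Q_gt1 by (simp add: add_pos_pos)
lemma gam_pos: "gam > 1" unfolding gam_def using g1_pos by simp

lemma G_pos: "G x > 0" unfolding G_def using Q_gt1 by simp

lemma G_snoc: "G (x @ [a]) = Q powr (-1/p) * G x"
  unfolding G_def by (subst powr_add[symmetric]) (simp add: diff_divide_distrib add_divide_distrib)

lemma G_butlast: "x \<noteq> [] \<Longrightarrow> G (butlast x) = Q powr (1/p) * G x"
  unfolding G_def by (subst powr_add[symmetric]) (simp add: of_nat_diff diff_divide_distrib Suc_le_eq)

lemma nbr_G_sum: assumes "x \<in> V"
  shows "(\<Sum>y\<in>tree_neighbors q x. G y) / (Q + 1) \<le> g1 * G x"
proof -
  have s: "(\<Sum>y\<in>tree_neighbors q x. G y) = (if x = [] then 0 else Q powr (1/p) * G x) + real (lmt q x) * (Q powr (-1/p) * G x)"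
    using nbrs_sum[OF assms, of G] by (simp add: G_snoc G_butlast)
  have a: "Q powr (-1/p) \<le> Q powr (1/p)" using Q_gt1 p_pos by simp
  have b: "Q * Q powr (-1/p) = Q powr (1 - 1/p)"
  proof -
    have "Q powr (1 - 1/p) = Q powr 1 * Q powr (-1/p)" by (subst powr_add[symmetric]) simp
    then show ?thesis using Q_gt1 by simp
  qed
  show ?thesis
  proof (cases "x = []")
    case True
    then have "(\<Sum>y\<in>tree_neighbors q x. G y) = (Q+1) * Q powr (-1/p) * G x" using s by (simp add: lmt_def)
    moreover have "(Q+1) * Q powr (-1/p) \<le> Q powr (1/p) + Q powr (1 - 1/p)"
      using a b by (simp add: algebra_simps)
    ultimately show ?thesis unfolding g1_def using G_pos[of x] Q_gt1
      by (simp add: pos_le_divide_eq mult_right_mono mult.commute)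
  next
    case False
    then have "(\<Sum>y\<in>tree_neighbors q x. G y) = (Q powr (1/p) + Q * Q powr (-1/p)) * G x" using s by (simp add: lmt_def algebra_simps)
    then show ?thesis unfolding g1_def using b Q_gt1 by simp
  qed
qed

definition env :: "nat \<Rightarrow> nat \<Rightarrow> nat list \<Rightarrow> real" where
  "env m D x = G x / (1 + real (length x - D)) ^ m"

definition bnd :: "nat \<Rightarrow> real \<Rightarrow> nat \<Rightarrow> (nat list \<Rightarrow> complex) \<Rightarrow> bool" where
  "bnd m C D h \<longleftrightarrow> (\<forall>x. cmod (h x) \<le> C * env m D x)"

definition Rop :: "(nat list \<Rightarrow> complex) \<Rightarrow> nat list \<Rightarrow> complex" where
  "Rop h x = (if x \<in> V then - of_real (1 / (g1 * (Q + 1))) * (\<Sum>y\<in>tree_neighbors q x. h y) else 0)"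

lemma env_pos: "env m D x > 0" unfolding env_def using G_pos by simp

lemma env_mono: "D \<le> D' \<Longrightarrow> env m D x \<le> env m D' x"
  unfolding env_def using G_pos[of x]
  by (intro divide_left_mono mult_pos_pos power_mono) auto

lemma nbr_len: assumes "x \<in> V" "y \<in> tree_neighbors q x" shows "length x \<le> Suc (length y)"
  using assms(2) unfolding nbrs_eq[OF assms(1)] by (auto split: if_splits)

lemma finite_nbrs: "x \<in> V \<Longrightarrow> finite (tree_neighbors q x)"
  by (simp add: nbrs_eq)

lemma Rop_bnd: assumes "bnd m C D h" "C \<ge> 0" shows "bnd m C (Suc D) (Rop h)"
  unfolding bnd_def
proof
  fix x
  show "cmod (Rop h x) \<le> C * env m (Suc D) x"
  proof (cases "x \<in> V")
    case False then show ?thesis using env_pos[of m "Suc D" x] assms(2) by (simp add: Rop_def)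
  next
    case True
    define E where "E = (1 + real (length x - Suc D)) ^ m"
    have Epos: "E > 0" unfolding E_def by simp
    have c: "1 / (g1 * (Q + 1)) > 0" using g1_pos Q_gt1 by simp
    have "cmod (Rop h x) = (1 / (g1 * (Q + 1))) * cmod (\<Sum>y\<in>tree_neighbors q x. h y)"
    proof -
      have e: "- of_real (1 / (g1 * (Q + 1))) * (\<Sum>y\<in>tree_neighbors q x. h y) = - (of_real (1 / (g1 * (Q + 1))) * (\<Sum>y\<in>tree_neighbors q x. h y))" by simp
      have "Rop h x = - (of_real (1 / (g1 * (Q + 1))) * (\<Sum>y\<in>tree_neighbors q x. h y))"
        unfolding Rop_def using True e by presburger
      then show ?thesis using c by (simp only: norm_minus_cancel norm_mult norm_of_real abs_of_pos)

    qed
    also have "\<dots> \<le> (1 / (g1 * (Q + 1))) * (\<Sum>y\<in>tree_neighbors q x. C * (G y / E))"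
    proof (intro mult_left_mono order.trans[OF norm_sum] sum_mono)
      fix y assume y: "y \<in> tree_neighbors q x"
      have "cmod (h y) \<le> C * env m D y" using assms(1) unfolding bnd_def by blast
      also have "\<dots> \<le> C * (G y / E)"
      proof (intro mult_left_mono assms(2))
        have "length x - Suc D \<le> length y - D" using nbr_len[OF True y] by simp
        then have "E \<le> (1 + real (length y - D)) ^ m" unfolding E_def
          by (intro power_mono) auto
        then show "env m D y \<le> G y / E" unfolding env_def using G_pos[of y] Epos
          by (intro divide_left_mono) auto
      qed
      finally show "cmod (h y) \<le> C * (G y / E)" .
    qed (use c in auto)
    also have "\<dots> = (C / E) * ((\<Sum>y\<in>tree_neighbors q x. G y) / (Q + 1)) / g1"
    proof -
      have "(\<Sum>y\<in>tree_neighbors q x. C * (G y / E)) = (C / E) * (\<Sum>y\<in>tree_neighbors q x. G y)"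
        by (simp add: sum_distrib_left)
      then show ?thesis by simp
    qed
    also have "\<dots> \<le> (C / E) * (g1 * G x) / g1"
      using nbr_G_sum[OF True] assms(2) Epos g1_pos
      by (intro divide_right_mono mult_left_mono) auto
    also have "\<dots> = C * env m (Suc D) x" unfolding env_def E_def using g1_pos by simp
    finally show ?thesis .
  qed
qed

end

context tp begin

definition Z :: "(nat list \<Rightarrow> complex) set" where
  "Z = {h. \<forall>x. x \<notin> V \<longrightarrow> h x = 0}"

lemma Rop_Z: "Rop h \<in> Z" unfolding Z_def Rop_def by simp

lemma Rop_lin: assumes "finite I"
  shows "Rop (\<lambda>x. \<Sum>i\<in>I. a i * f i x) = (\<lambda>x. \<Sum>i\<in>I. a i * Rop (f i) x)"
proof
  fix x show "Rop (\<lambda>x. \<Sum>i\<in>I. a i * f i x) x = (\<Sum>i\<in>I. a i * Rop (f i) x)"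
    unfolding Rop_def
    by (auto simp: sum_distrib_left sum.swap[of _ I] mult.left_commute)
qed

lemma Rop_lin2: "Rop (\<lambda>x. a * f x + c * g x) = (\<lambda>x. a * Rop f x + c * Rop g x)"
  unfolding Rop_def by (auto simp: sum.distrib sum_distrib_left algebra_simps)

lemma bnd_nonneg_C: "bnd m C D h \<Longrightarrow> C \<ge> 0"
proof -
  assume "bnd m C D h"
  then have "cmod (h []) \<le> C * env m D []" unfolding bnd_def by blast
  then have "0 \<le> C * env m D []" using norm_ge_zero order_trans by blast
  then show "C \<ge> 0" using env_pos[of m D "[]"] by (simp add: zero_le_mult_iff)
qed

lemma Rpow_bnd: assumes "bnd m C D h" shows "bnd m C (D + i) ((Rop ^^ i) h)"
proof (induction i)
  case 0 then show ?case using assms by simp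
next
  case (Suc i)
  then show ?case using Rop_bnd[OF Suc.IH bnd_nonneg_C[OF assms]] by simp
qed

lemma bnd_mono: "bnd m C D h \<Longrightarrow> C \<le> C' \<Longrightarrow> D \<le> D' \<Longrightarrow> bnd m C' D' h"
  unfolding bnd_def
proof
  fix x assume b: "\<forall>x. cmod (h x) \<le> C * env m D x" and c: "C \<le> C'" "D \<le> D'"
  have C0: "C \<ge> 0" using bnd_nonneg_C b unfolding bnd_def by blast
  have "cmod (h x) \<le> C * env m D x" using b by blast
  also have "\<dots> \<le> C' * env m D' x"
    using c C0 env_mono[OF c(2), of m x] env_pos[of m D x] by (intro mult_mono) auto
  finally show "cmod (h x) \<le> C' * env m D' x" .
qed

definition Opn :: "nat \<Rightarrow> (nat \<Rightarrow> real) \<Rightarrow> (nat list \<Rightarrow> complex) \<Rightarrow> nat list \<Rightarrow> complex" where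
  "Opn N c h = (\<lambda>x. \<Sum>i\<le>N. of_real (c i) * (Rop ^^ i) h x)"

lemma Opn_bnd: assumes "bnd m C D h"
  shows "bnd m ((\<Sum>i\<le>N. \<bar>c i\<bar>) * C) (D + N) (Opn N c h)"
  unfolding bnd_def
proof
  fix x
  have C0: "C \<ge> 0" using bnd_nonneg_C[OF assms] .
  have "cmod (Opn N c h x) \<le> (\<Sum>i\<le>N. cmod (of_real (c i) * (Rop ^^ i) h x))"
    unfolding Opn_def by (rule norm_sum)
  also have "\<dots> \<le> (\<Sum>i\<le>N. \<bar>c i\<bar> * (C * env m (D + N) x))"
  proof (rule sum_mono)
    fix i assume i: "i \<in> {..N}"
    have "cmod ((Rop ^^ i) h x) \<le> C * env m (D + i) x"
      using Rpow_bnd[OF assms, of i] unfolding bnd_def by blast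
    also have "\<dots> \<le> C * env m (D + N) x" using i C0 env_mono[of "D+i" "D+N" m x]
      by (intro mult_left_mono) auto
    finally show "cmod (of_real (c i) * (Rop ^^ i) h x) \<le> \<bar>c i\<bar> * (C * env m (D + N) x)"
      by (simp add: norm_mult mult_left_mono)
  qed
  also have "\<dots> = (\<Sum>i\<le>N. \<bar>c i\<bar>) * C * env m (D + N) x" by (simp add: sum_distrib_right mult.assoc)
  finally show "cmod (Opn N c h x) \<le> (\<Sum>i\<le>N. \<bar>c i\<bar>) * C * env m (D + N) x" .
qed

end

context tp begin

lemma root_V: "[] \<in> V" unfolding tree_vertices_def by simp

lemma weight_G: "weight q p m x * G x = (1 + real (length x)) ^ m"
proof -
  have "Q powr (real (length x) / p) * Q powr (- real (length x) / p) = 1"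
    using Q_gt1 by (subst powr_add[symmetric]) simp
  then show ?thesis unfolding weight_def G_def tree_norm_len by simp
qed

lemma weight_pos: "weight q p m x > 0" unfolding weight_def using Q_gt1 by simp

lemma weight_env: "weight q p m x * env m D x \<le> (1 + real D) ^ m"
proof -
  have le: "1 + real (length x) \<le> (1 + real D) * (1 + real (length x - D))"
  proof (cases "length x \<ge> D")
    case True
    then obtain k where k: "length x = D + k" using le_Suc_ex by blast
    then show ?thesis by (simp add: algebra_simps)
  next
    case False then show ?thesis by simp
  qed
  have "weight q p m x * env m D x = (1 + real (length x)) ^ m / (1 + real (length x - D)) ^ m"
    unfolding env_def using weight_G[of m x] by (simp add: mult.assoc[symmetric])
  also have "\<dots> = ((1 + real (length x)) / (1 + real (length x - D))) ^ m" by (simp add: power_divide)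
  also have "\<dots> \<le> (1 + real D) ^ m"
    using le by (intro power_mono) (auto simp: divide_simps mult.commute)
  finally show ?thesis .
qed

lemma weight_env0: "weight q p m x * env m 0 x = 1"
  unfolding env_def using weight_G[of m x] by (simp add: mult.assoc[symmetric])

lemma nu_le: assumes "bnd m C D h" shows "nu q p m h \<le> (1 + real D) ^ m * C"
  unfolding nu_def
proof (rule cSUP_least)
  show "V \<noteq> {}" using root_V by blast
  fix x
  have C0: "C \<ge> 0" using bnd_nonneg_C[OF assms] .
  have "weight q p m x * cmod (h x) \<le> weight q p m x * (C * env m D x)"
    using assms weight_pos[of m x] unfolding bnd_def by (intro mult_left_mono) auto
  also have "\<dots> = C * (weight q p m x * env m D x)" by simp
  also have "\<dots> \<le> C * (1 + real D) ^ m" using weight_env C0 by (intro mult_left_mono) auto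
  finally show "weight q p m x * cmod (h x) \<le> (1 + real D) ^ m * C" by (simp add: mult.commute)
qed

lemma Sp_Z: "f \<in> Sp q p \<Longrightarrow> f \<in> Z" unfolding Sp_def Z_def by auto

lemma Sp_le_nu: assumes "f \<in> Sp q p" "x \<in> V" shows "weight q p m x * cmod (f x) \<le> nu q p m f"
  unfolding nu_def using assms unfolding Sp_def by (intro cSUP_upper) auto

lemma nu_nonneg: assumes "f \<in> Sp q p" shows "nu q p m f \<ge> 0"
  using Sp_le_nu[OF assms root_V, of m] weight_pos[of m "[]"]
  by (meson mult_nonneg_nonneg norm_ge_zero order_trans less_imp_le)

lemma bnd_Sp: assumes "f \<in> Sp q p" shows "bnd m (nu q p m f) 0 f"
  unfolding bnd_def
proof
  fix x show "cmod (f x) \<le> nu q p m f * env m 0 x"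
  proof (cases "x \<in> V")
    case False then have "f x = 0" using assms unfolding Sp_def by auto
    then show ?thesis using nu_nonneg[OF assms] env_pos[of m 0 x] by simp
  next
    case True
    have "cmod (f x) = (weight q p m x * cmod (f x)) * env m 0 x"
      using weight_env0[of m x] by (simp add: algebra_simps)
    also have "\<dots> \<le> nu q p m f * env m 0 x"
      using Sp_le_nu[OF assms True] env_pos[of m 0 x] by (intro mult_right_mono) auto
    finally show ?thesis .
  qed
qed

lemma Sp_I: assumes "h \<in> Z" "\<And>m. \<exists>C D. bnd m C D h" shows "h \<in> Sp q p"
  unfolding Sp_def
proof (intro CollectI conjI allI impI)
  fix x assume "x \<notin> V" then show "h x = 0" using assms(1) unfolding Z_def by auto
next
  fix m
  obtain C D where b: "bnd m C D h" using assms(2) by blast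
  show "bdd_above ((\<lambda>x. weight q p m x * cmod (h x)) ` V)"
  proof (rule bdd_aboveI2)
    fix x
    have C0: "C \<ge> 0" using bnd_nonneg_C[OF b] .
    have "weight q p m x * cmod (h x) \<le> weight q p m x * (C * env m D x)"
      using b weight_pos[of m x] unfolding bnd_def by (intro mult_left_mono) auto
    also have "\<dots> = C * (weight q p m x * env m D x)" by simp
    also have "\<dots> \<le> C * (1 + real D) ^ m" using weight_env C0 by (intro mult_left_mono) auto
    finally show "weight q p m x * cmod (h x) \<le> C * (1 + real D) ^ m" .
  qed
qed

lemma bnd_lin2: assumes "bnd m C1 D f" "bnd m C2 D g"
  shows "bnd m (cmod a * C1 + cmod c * C2) D (\<lambda>x. a * f x + c * g x)"
  unfolding bnd_def
proof
  fix x
  have "cmod (a * f x + c * g x) \<le> cmod a * cmod (f x) + cmod c * cmod (g x)"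
    by (metis norm_mult norm_triangle_ineq)
  also have "\<dots> \<le> cmod a * (C1 * env m D x) + cmod c * (C2 * env m D x)"
    using assms unfolding bnd_def by (intro add_mono mult_left_mono) auto
  finally show "cmod (a * f x + c * g x) \<le> (cmod a * C1 + cmod c * C2) * env m D x"
    by (simp add: algebra_simps)
qed

lemma Sp_lin2: assumes "f \<in> Sp q p" "g \<in> Sp q p" shows "(\<lambda>x. a * f x + c * g x) \<in> Sp q p"
proof (rule Sp_I)
  show "(\<lambda>x. a * f x + c * g x) \<in> Z" using Sp_Z[OF assms(1)] Sp_Z[OF assms(2)] unfolding Z_def by auto
  fix m show "\<exists>C D. bnd m C D (\<lambda>x. a * f x + c * g x)"
    using bnd_lin2[OF bnd_Sp[OF assms(1)] bnd_Sp[OF assms(2)]] by blast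
qed

lemma Sp_scale: assumes "f \<in> Sp q p" shows "(\<lambda>x. a * f x) \<in> Sp q p"
  using Sp_lin2[OF assms assms, of a 0] by simp

lemma Sp_diff: assumes "f \<in> Sp q p" "g \<in> Sp q p" shows "(\<lambda>x. f x - g x) \<in> Sp q p"
  using Sp_lin2[OF assms, of 1 "-1"] by simp

lemma Sp_add: assumes "f \<in> Sp q p" "g \<in> Sp q p" shows "(\<lambda>x. f x + g x) \<in> Sp q p"
  using Sp_lin2[OF assms, of 1 1] by simp

lemma Rop_Sp: assumes "f \<in> Sp q p" shows "Rop f \<in> Sp q p"
proof (rule Sp_I)
  show "Rop f \<in> Z" by (rule Rop_Z)
  fix m show "\<exists>C D. bnd m C D (Rop f)"
    using Rop_bnd[OF bnd_Sp[OF assms] nu_nonneg[OF assms]] by blast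
qed

definition bb :: real where "bb = 1 / gam"
definition pp :: real where "pp = g1 / gam"

lemma bb_pp: "bb + pp = 1" unfolding bb_def pp_def gam_def using g1_pos by (simp add: field_simps)
lemma bb_pos: "bb > 0" unfolding bb_def using gam_pos by simp
lemma pp_pos: "pp > 0" unfolding pp_def using gam_pos g1_pos by simp

definition Uop :: "(nat list \<Rightarrow> complex) \<Rightarrow> nat list \<Rightarrow> complex" where
  "Uop h = (\<lambda>x. lap q h x / of_real gam)"

lemma Uop_eq: assumes "h \<in> Z"
  shows "Uop h = (\<lambda>x. of_real bb * h x + of_real pp * Rop h x)"
proof
  fix x show "Uop h x = of_real bb * h x + of_real pp * Rop h x"
  proof (cases "x \<in> V")
    case False then show ?thesis using assms unfolding Uop_def lap_def Rop_def Z_def by auto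
  next
    case True
    have g: "complex_of_real gam \<noteq> 0" "complex_of_real g1 \<noteq> 0" "1 + complex_of_nat q \<noteq> 0" "complex_of_nat q + 1 \<noteq> 0"
    proof -
      have "complex_of_nat q + 1 = of_nat (Suc q)" by simp
      moreover have "(of_nat (Suc q) :: complex) \<noteq> 0" by (simp only: of_nat_eq_0_iff)
      ultimately show "complex_of_real gam \<noteq> 0" "complex_of_real g1 \<noteq> 0" "1 + complex_of_nat q \<noteq> 0" "complex_of_nat q + 1 \<noteq> 0"
        using gam_pos g1_pos by (auto simp: add.commute)
    qed
    have aux: "\<And>c g k a S :: complex. c \<noteq> 0 \<Longrightarrow> g \<noteq> 0 \<Longrightarrow> k \<noteq> 0 \<Longrightarrow>
       (a - 1/k * S)/c = 1/c * a + g/c * (-(1/(g*k)) * S)"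
      by (simp add: field_simps)
    have "Uop h x = (h x - 1 / (of_nat q + 1) * (\<Sum>y\<in>tree_neighbors q x. h y)) / of_real gam"
      unfolding Uop_def lap_def using True by simp
    also have "\<dots> = 1 / of_real gam * h x + of_real g1 / of_real gam * (-(1/(of_real g1*(of_nat q + 1))) * (\<Sum>y\<in>tree_neighbors q x. h y))"
      by (rule aux) (use g in auto)
    also have "\<dots> = of_real bb * h x + of_real pp * Rop h x"
      unfolding Rop_def bb_def pp_def using True by simp
    finally show ?thesis .
  qed
qed

lemma lap_Uop: "lap q h = (\<lambda>x. of_real gam * Uop h x)"
  unfolding Uop_def using gam_pos by auto

lemma Uop_Sp: assumes "f \<in> Sp q p" shows "Uop f \<in> Sp q p"
  unfolding Uop_eq[OF Sp_Z[OF assms]] using Sp_lin2[OF assms Rop_Sp[OF assms]] .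

lemma Upow_Sp: assumes "f \<in> Sp q p" shows "(Uop ^^ n) f \<in> Sp q p"
  by (induction n) (auto simp: assms Uop_Sp)

lemma lap_Sp: assumes "f \<in> Sp q p" shows "lap q f \<in> Sp q p"
  unfolding lap_Uop by (rule Sp_scale[OF Uop_Sp[OF assms]])

end

context tp begin

definition bet :: "nat \<Rightarrow> nat \<Rightarrow> real" where
  "bet n i = real (n choose i) * pp ^ i * bb ^ (n - i)"

lemma bet_big: "n < i \<Longrightarrow> bet n i = 0" unfolding bet_def by simp

lemma bet_nonneg: "bet n i \<ge> 0" unfolding bet_def using pp_pos bb_pos by simp

lemma bet_Suc: "bet (Suc n) i = bb * bet n i + pp * (if i = 0 then 0 else bet n (i - 1))"
proof (cases i)
  case 0 then show ?thesis unfolding bet_def by simp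
next
  case (Suc j)
  show ?thesis
  proof (cases "Suc j \<le> n")
    case True
    then have "n - j = Suc (n - Suc j)" by simp
    then have e: "bb ^ (n - j) = bb * bb ^ (n - Suc j)" by simp
    show ?thesis unfolding bet_def Suc using True e
      by (simp add: algebra_simps)
  next
    case False
    then have "n - j = 0" by simp
    then show ?thesis unfolding bet_def Suc using False by (simp add: algebra_simps)
  qed
qed

lemma bet_sum_Suc: "(\<Sum>i\<le>Suc n. bet (Suc n) i * f i) = (\<Sum>i\<le>n. bet n i * (bb * f i + pp * f (Suc i)))"
proof -
  have "(\<Sum>i\<le>Suc n. bet (Suc n) i * f i) = (\<Sum>i\<le>Suc n. bb * bet n i * f i) + (\<Sum>i\<le>Suc n. pp * (if i = 0 then 0 else bet n (i - 1)) * f i)"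
    unfolding bet_Suc by (simp add: sum.distrib algebra_simps)
  also have "(\<Sum>i\<le>Suc n. bb * bet n i * f i) = (\<Sum>i\<le>n. bb * bet n i * f i)"
    by (simp add: bet_big)
  also have "(\<Sum>i\<le>Suc n. pp * (if i = 0 then 0 else bet n (i - 1)) * f i) = (\<Sum>i\<le>n. pp * bet n i * f (Suc i))"
    by (subst sum.atMost_Suc_shift) simp
  finally show ?thesis by (simp add: sum.distrib algebra_simps)
qed

lemma bbeq: "bb = 1 - pp" using bb_pp by simp

lemma bet_S0: "(\<Sum>i\<le>n. bet n i) = 1"
proof -
  have "(pp + bb) ^ n = (\<Sum>i\<le>n. bet n i)" unfolding binomial_ring bet_def by simp
  then show ?thesis using bb_pp by (simp add: add.commute)
qed

lemma bet_S1: "(\<Sum>i\<le>n. bet n i * real i) = real n * pp"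
proof (induction n)
  case 0 then show ?case by (simp add: bet_def)
next
  case (Suc n)
  have "(\<Sum>i\<le>Suc n. bet (Suc n) i * real i) = (\<Sum>i\<le>n. bet n i * (bb * real i + pp * real (Suc i)))"
    by (rule bet_sum_Suc)
  also have "\<dots> = (\<Sum>i\<le>n. bet n i * real i + pp * bet n i)"
    by (rule sum.cong) (simp_all add: bbeq algebra_simps)
  also have "\<dots> = (\<Sum>i\<le>n. bet n i * real i) + pp * (\<Sum>i\<le>n. bet n i)"
    by (simp add: sum.distrib sum_distrib_left)
  finally show ?case using Suc bet_S0 by (simp add: algebra_simps)
qed

lemma bet_S2: "(\<Sum>i\<le>n. bet n i * real i ^ 2) = real n * pp * bb + (real n * pp) ^ 2"
proof (induction n)
  case 0 then show ?case by (simp add: bet_def)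
next
  case (Suc n)
  have "(\<Sum>i\<le>Suc n. bet (Suc n) i * real i ^ 2) = (\<Sum>i\<le>n. bet n i * (bb * real i ^ 2 + pp * real (Suc i) ^ 2))"
    by (rule bet_sum_Suc)
  also have "\<dots> = (\<Sum>i\<le>n. bet n i * real i ^ 2 + 2 * pp * (bet n i * real i) + pp * bet n i)"
    by (rule sum.cong) (simp_all add: bbeq algebra_simps power2_eq_square)
  also have "\<dots> = (\<Sum>i\<le>n. bet n i * real i ^ 2) + 2 * pp * (\<Sum>i\<le>n. bet n i * real i) + pp * (\<Sum>i\<le>n. bet n i)"
    by (simp add: sum.distrib sum_distrib_left)
  finally show ?case using Suc bet_S0 bet_S1 by (simp add: bbeq algebra_simps power2_eq_square)
qed

lemma bet_var: "(\<Sum>i\<le>n. bet n i * (real i - real n * pp) ^ 2) = real n * pp * bb"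
proof -
  have "(\<Sum>i\<le>n. bet n i * (real i - real n * pp) ^ 2) =
     (\<Sum>i\<le>n. bet n i * real i ^ 2) - 2 * (real n * pp) * (\<Sum>i\<le>n. bet n i * real i) + (real n * pp)^2 * (\<Sum>i\<le>n. bet n i)"
    by (simp add: sum.distrib sum_subtractf sum_distrib_left algebra_simps power2_eq_square)
  then show ?thesis using bet_S0 bet_S1 bet_S2 by (simp add: power2_eq_square)
qed

lemma bet_diff: "real (Suc n) * bb * bet n i = real (Suc n - i) * bet (Suc n) i"
proof (cases "i \<le> n")
  case True
  have c: "real (Suc n - i) * real (Suc n choose i) = real (Suc n) * real (n choose i)"
    using binomial_absorb_comp[of "Suc n" i] by (metis diff_Suc_1 of_nat_mult)
  have e: "bb ^ (Suc n - i) = bb * bb ^ (n - i)" using True by (simp add: Suc_diff_le)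
  have "real (Suc n - i) * (real (Suc n choose i) * pp ^ i * (bb * bb ^ (n - i)))
      = (real (Suc n - i) * real (Suc n choose i)) * (pp ^ i * bb * bb ^ (n - i))" by (simp only: mult_ac)
  also have "\<dots> = real (Suc n) * bb * (real (n choose i) * pp ^ i * bb ^ (n - i))" unfolding c by (simp only: mult_ac)
  finally have X: "real (Suc n - i) * (real (Suc n choose i) * pp ^ i * (bb * bb ^ (n - i))) = real (Suc n) * bb * (real (n choose i) * pp ^ i * bb ^ (n - i))" .
  show ?thesis unfolding bet_def e by (rule X[symmetric])
next
  case False
  then show ?thesis unfolding bet_def by (cases "i = Suc n") auto
qed

definition dd :: "nat \<Rightarrow> nat \<Rightarrow> real" where "dd n i = bet (Suc n) i - bet n i"

lemma dd_eq: "dd n i = bet (Suc n) i * (real i - real (Suc n) * pp) / (real (Suc n) * bb)"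
proof -
  have "real (Suc n) * bb * dd n i = real (Suc n) * bb * bet (Suc n) i - real (Suc n - i) * bet (Suc n) i"
    unfolding dd_def using bet_diff[of n i] by (simp add: algebra_simps)
  also have "\<dots> = bet (Suc n) i * (real i - real (Suc n) * pp)"
  proof (cases "i \<le> Suc n")
    case True then show ?thesis by (simp add: bbeq of_nat_diff algebra_simps)
  next
    case False then show ?thesis by (simp add: bet_big)
  qed
  finally have h: "real (Suc n) * bb * dd n i = bet (Suc n) i * (real i - real (Suc n) * pp)" .
  have nz: "real (Suc n) * bb \<noteq> 0" using bb_pos by simp
  show ?thesis unfolding h[symmetric] using nz by (metis nonzero_mult_div_cancel_left)
qed

definition l1 :: "nat \<Rightarrow> real" where "l1 n = (\<Sum>i\<le>Suc n. \<bar>dd n i\<bar>)"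

lemma l1_sq: "l1 n ^ 2 \<le> pp / (real (Suc n) * bb)"
proof -
  define N where "N = Suc n"
  define a where "a = sqrt (real N * pp * bb)"
  have a0: "a > 0" unfolding a_def N_def using pp_pos bb_pos by simp
  have a2: "a ^ 2 = real N * pp * bb" unfolding a_def using pp_pos bb_pos by simp
  have amgm: "\<And>t. \<bar>t\<bar> \<le> (t ^ 2 / a + a) / 2"
  proof -
    fix t :: real
    have "0 \<le> (\<bar>t\<bar> - a) ^ 2" by simp
    then have "2 * a * \<bar>t\<bar> \<le> t^2 + a^2" by (simp add: power2_eq_square algebra_simps)
    then show "\<bar>t\<bar> \<le> (t ^ 2 / a + a) / 2" using a0 by (simp add: field_simps power2_eq_square)
  qed
  have "l1 n = (\<Sum>i\<le>N. bet N i * \<bar>real i - real N * pp\<bar> / (real N * bb))"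
    unfolding l1_def dd_eq N_def
  proof (intro sum.cong refl)
    fix i
    show "\<bar>bet (Suc n) i * (real i - real (Suc n) * pp) / (real (Suc n) * bb)\<bar> = bet (Suc n) i * \<bar>real i - real (Suc n) * pp\<bar> / (real (Suc n) * bb)"
      using bet_nonneg[of "Suc n" i] bb_pos by (simp add: abs_mult abs_divide)
  qed
  also have "\<dots> = (\<Sum>i\<le>N. bet N i * \<bar>real i - real N * pp\<bar>) / (real N * bb)"
    by (simp only: sum_divide_distrib)
  also have "(\<Sum>i\<le>N. bet N i * \<bar>real i - real N * pp\<bar>) \<le> (\<Sum>i\<le>N. bet N i * (((real i - real N * pp) ^ 2 / a + a) / 2))"
    by (intro sum_mono mult_left_mono amgm bet_nonneg)
  also have "\<dots> = (\<Sum>i\<le>N. (bet N i * (real i - real N * pp) ^ 2 / a + a * bet N i) / 2)"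
    by (intro sum.cong refl) (simp add: algebra_simps add_divide_distrib)
  also have "\<dots> = ((\<Sum>i\<le>N. bet N i * (real i - real N * pp) ^ 2) / a + a * (\<Sum>i\<le>N. bet N i)) / 2"
    by (simp only: sum_divide_distrib[symmetric] sum.distrib sum_distrib_left)
  also have "\<dots> = ((real N * pp * bb) / a + a) / 2" unfolding bet_var bet_S0 by simp
  also have "\<dots> = a" using a2 a0 by (simp add: power2_eq_square field_simps)
  finally have "l1 n \<le> a / (real N * bb)" using bb_pos by (simp add: divide_right_mono)
  moreover have "l1 n \<ge> 0" unfolding l1_def by simp
  ultimately have "l1 n ^ 2 \<le> (a / (real N * bb)) ^ 2" by (intro power_mono) auto
  also have "\<dots> = a ^ 2 / (real N * bb) ^ 2" by (simp add: power_divide)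
  also have "\<dots> = (real N * bb) * pp / ((real N * bb) * (real N * bb))" unfolding a2 by (simp add: power2_eq_square mult_ac)
  also have "\<dots> = pp / (real N * bb)" using bb_pos unfolding N_def by simp
  finally show ?thesis unfolding N_def .
qed

end

context tp begin

lemma Rpow_Z: "h \<in> Z \<Longrightarrow> (Rop ^^ i) h \<in> Z"
  by (cases i) (auto simp: Rop_Z)

lemma Opn_Z: "h \<in> Z \<Longrightarrow> Opn N c h \<in> Z"
  using Rpow_Z unfolding Opn_def Z_def by (auto intro!: sum.neutral)

lemma Uop_Z: "Uop h \<in> Z" unfolding Uop_def Z_def lap_def by simp

lemma Uop_diff: "Uop (\<lambda>x. f x - g x) = (\<lambda>x. Uop f x - Uop g x)"
proof
  fix x show "Uop (\<lambda>x. f x - g x) x = Uop f x - Uop g x"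
    unfolding Uop_def lap_def by (cases "x \<in> V") (simp_all add: sum_subtractf diff_divide_distrib right_diff_distrib)
qed

lemma Upow_diff: "(Uop ^^ n) (\<lambda>x. f x - g x) = (\<lambda>x. (Uop ^^ n) f x - (Uop ^^ n) g x)"
  by (induction n) (simp_all add: Uop_diff)

lemma bet_sum_SucC: "(\<Sum>i\<le>Suc n. of_real (bet (Suc n) i) * (F i :: complex)) = (\<Sum>i\<le>n. of_real (bet n i) * (of_real bb * F i + of_real pp * F (Suc i)))"
proof -
  have "(\<Sum>i\<le>Suc n. of_real (bet (Suc n) i) * F i) = (\<Sum>i\<le>Suc n. of_real bb * of_real (bet n i) * F i) + (\<Sum>i\<le>Suc n. of_real pp * of_real (if i = 0 then 0 else bet n (i - 1)) * F i)"
    unfolding bet_Suc by (simp add: sum.distrib algebra_simps)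
  also have "(\<Sum>i\<le>Suc n. of_real bb * of_real (bet n i) * F i) = (\<Sum>i\<le>n. of_real bb * of_real (bet n i) * F i)"
    by (simp add: bet_big)
  also have "(\<Sum>i\<le>Suc n. of_real pp * of_real (if i = 0 then 0 else bet n (i - 1)) * F i) = (\<Sum>i\<le>n. of_real pp * of_real (bet n i) * F (Suc i))"
    by (subst sum.atMost_Suc_shift) simp
  finally show ?thesis by (simp add: sum.distrib algebra_simps)
qed

lemma Upow_expand: assumes "h \<in> Z" shows "(Uop ^^ n) h = Opn n (bet n) h"
proof (induction n)
  case 0 then show ?case unfolding Opn_def bet_def by simp
next
  case (Suc n)
  have R: "Rop (Opn n (bet n) h) = (\<lambda>x. \<Sum>i\<le>n. of_real (bet n i) * (Rop ^^ Suc i) h x)"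
    unfolding Opn_def by (subst Rop_lin) auto
  have "(Uop ^^ Suc n) h = Uop (Opn n (bet n) h)" using Suc by simp
  also have "\<dots> = (\<lambda>x. of_real bb * Opn n (bet n) h x + of_real pp * Rop (Opn n (bet n) h) x)"
    by (rule Uop_eq[OF Opn_Z[OF assms]])
  also have "\<dots> = Opn (Suc n) (bet (Suc n)) h"
  proof
    fix x
    show "of_real bb * Opn n (bet n) h x + of_real pp * Rop (Opn n (bet n) h) x = Opn (Suc n) (bet (Suc n)) h x"
      unfolding R unfolding Opn_def bet_sum_SucC[of n "\<lambda>i. (Rop ^^ i) h x"]
      by (simp add: sum_distrib_left sum.distrib algebra_simps)
  qed
  finally show ?case .
qed

lemma Opn_ext: assumes "\<And>i. i > N \<Longrightarrow> c i = 0" shows "Opn (Suc N) c h = Opn N c h"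
  unfolding Opn_def using assms by simp

definition Dop :: "(nat list \<Rightarrow> complex) \<Rightarrow> nat list \<Rightarrow> complex" where
  "Dop f = (\<lambda>x. Uop f x - f x)"

definition W :: "nat \<Rightarrow> (nat list \<Rightarrow> complex) \<Rightarrow> nat list \<Rightarrow> complex" where
  "W n f = (Uop ^^ n) (Dop f)"

lemma Dop_Z: "h \<in> Z \<Longrightarrow> Dop h \<in> Z" using Uop_Z unfolding Dop_def Z_def by auto

lemma Upow_Z: "h \<in> Z \<Longrightarrow> (Uop ^^ n) h \<in> Z"
  by (cases n) (auto simp: Uop_Z)

lemma W_Z: "h \<in> Z \<Longrightarrow> W n h \<in> Z" unfolding W_def by (intro Upow_Z Dop_Z)

lemma W_eq: assumes "h \<in> Z" shows "W n h = Opn (Suc n) (dd n) h"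
proof -
  have "W n h = (\<lambda>x. (Uop ^^ n) (Uop h) x - (Uop ^^ n) h x)"
    unfolding W_def Dop_def Upow_diff ..
  also have "(Uop ^^ n) (Uop h) = (Uop ^^ Suc n) h" by (simp add: funpow_Suc_right del: funpow.simps)
  also have "\<dots> = Opn (Suc n) (bet (Suc n)) h" by (rule Upow_expand[OF assms])
  also have "(Uop ^^ n) h = Opn (Suc n) (bet n) h"
    using Upow_expand[OF assms, of n] Opn_ext[of n "bet n" h] bet_big by simp
  finally show ?thesis unfolding Opn_def dd_def
    by (simp add: sum_subtractf algebra_simps)
qed

lemma W_bnd: assumes "h \<in> Z" "bnd m C D h" shows "bnd m (l1 n * C) (D + Suc n) (W n h)"
  unfolding W_eq[OF assms(1)] l1_def by (rule Opn_bnd[OF assms(2)])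

lemma Wpow_Z: "h \<in> Z \<Longrightarrow> (W n ^^ K) h \<in> Z"
  by (induction K) (auto simp: W_Z)

lemma Wpow_bnd: assumes "h \<in> Z" "bnd m C 0 h" shows "bnd m (l1 n ^ K * C) (K * Suc n) ((W n ^^ K) h)"
proof (induction K)
  case 0 then show ?case using assms by simp
next
  case (Suc K)
  have "bnd m (l1 n * (l1 n ^ K * C)) (K * Suc n + Suc n) (W n ((W n ^^ K) h))"
    by (rule W_bnd[OF Wpow_Z[OF assms(1)] Suc.IH])
  then show ?case by (simp add: algebra_simps)
qed

lemma Dop_Uop: "Dop (Uop f) = Uop (Dop f)"
  unfolding Dop_def Uop_diff ..

lemma Dop_Upow: "Dop ((Uop ^^ j) f) = (Uop ^^ j) (Dop f)"
  by (induction j) (simp_all add: Dop_Uop)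

lemma Wpow_eq: "(W n ^^ K) f = (Uop ^^ (n * K)) ((Dop ^^ K) f)"
proof (induction K)
  case 0 then show ?case by simp
next
  case (Suc K)
  have "(W n ^^ Suc K) f = W n ((W n ^^ K) f)" by simp
  also have "\<dots> = (Uop ^^ n) (Dop ((Uop ^^ (n * K)) ((Dop ^^ K) f)))"
    unfolding Suc.IH W_def ..
  also have "\<dots> = (Uop ^^ n) ((Uop ^^ (n * K)) (Dop ((Dop ^^ K) f)))" by (simp add: Dop_Upow)
  also have "\<dots> = (Uop ^^ (n * Suc K)) ((Dop ^^ Suc K) f)" by (simp add: funpow_add)
  finally show ?case .
qed

lemma Dop_Sp: "f \<in> Sp q p \<Longrightarrow> Dop f \<in> Sp q p"
  unfolding Dop_def by (intro Sp_diff Uop_Sp)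

lemma Dpow_Sp: "f \<in> Sp q p \<Longrightarrow> (Dop ^^ K) f \<in> Sp q p"
  by (induction K) (auto simp: Dop_Sp)

end

lemma poly_geo_lim: "r > (1::real) \<Longrightarrow> (\<lambda>n. (1 + real n) ^ m / r ^ n) \<longlonglongrightarrow> 0"
  by real_asymp

lemma zero_if_le_inv: fixes z :: complex
  assumes "\<And>n. cmod z \<le> C / real (Suc n)" shows "z = 0"
proof (rule ccontr)
  assume "z \<noteq> 0"
  then have z: "cmod z > 0" by simp
  obtain n where n: "real n > C / cmod z" using reals_Archimedean2 by blast
  have "cmod z \<le> C / real (Suc n)" by (rule assms)
  then have "cmod z * real (Suc n) \<le> C" by (simp add: field_simps)
  moreover have "C < cmod z * real n" using n z by (simp add: field_simps)
  moreover have "cmod z * real n \<le> cmod z * real (Suc n)" using z by simp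
  ultimately show False by simp
qed

context tp begin

lemma tempered_add: assumes "tempered q p T" "f \<in> Sp q p" "g \<in> Sp q p"
  shows "T (\<lambda>x. f x + g x) = T f + T g"
  using assms unfolding tempered_def by blast

lemma tempered_scale: assumes "tempered q p T" "f \<in> Sp q p"
  shows "T (\<lambda>x. c * f x) = c * T f"
  using assms unfolding tempered_def by blast

lemma tempered_diff: assumes "tempered q p T" "f \<in> Sp q p" "g \<in> Sp q p"
  shows "T (\<lambda>x. f x - g x) = T f - T g"
proof -
  have g': "(\<lambda>x. (-1) * g x) \<in> Sp q p" by (rule Sp_scale[OF assms(3)])
  have "T (\<lambda>x. f x + (-1) * g x) = T f + T (\<lambda>x. (-1) * g x)"
    using tempered_add[OF assms(1) assms(2) g'] by simp
  moreover have "T (\<lambda>x. (-1) * g x) = (-1) * T g"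
    by (rule tempered_scale[OF assms(1) assms(3)])
  ultimately show ?thesis by simp
qed

end

context tp begin

lemma sc_temp: "seq_cond q p lam T \<Longrightarrow> tempered q p (T k)"
  unfolding seq_cond_def by blast

lemma sc_bound: assumes "seq_cond q p lam T"
  obtains M m where "M > 0" "\<And>\<phi> k. \<phi> \<in> Sp q p \<Longrightarrow> cmod (T k \<phi>) \<le> M * nu q p m \<phi>"
  using assms unfolding seq_cond_def by blast

lemma T_U: assumes sc: "seq_cond q p lam T" and k: "k \<ge> 1" and ph: "\<phi> \<in> Sp q p"
  shows "T k (Uop \<phi>) = (lam / of_real gam) * T (k - 1) \<phi>"
proof -
  have "T k (lap q \<phi>) = lam * T (k - 1) \<phi>" using sc k ph unfolding seq_cond_def by blast
  moreover have "T k (lap q \<phi>) = of_real gam * T k (Uop \<phi>)"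
    unfolding lap_Uop by (rule tempered_scale[OF sc_temp[OF sc] Uop_Sp[OF ph]])
  ultimately show ?thesis using gam_pos by (simp add: field_simps)
qed

lemma T_Upow: assumes sc: "seq_cond q p lam T" and ph: "\<phi> \<in> Sp q p"
  shows "T (k + N) ((Uop ^^ N) \<phi>) = (lam / of_real gam) ^ N * T k \<phi>"
proof (induction N)
  case 0 then show ?case by simp
next
  case (Suc N)
  have "T (k + Suc N) ((Uop ^^ Suc N) \<phi>) = T (k + Suc N) (Uop ((Uop ^^ N) \<phi>))" by simp
  also have "\<dots> = (lam / of_real gam) * T (k + N) ((Uop ^^ N) \<phi>)"
    using T_U[OF sc _ Upow_Sp[OF ph, of N], of "k + Suc N"] by simp
  finally show ?case using Suc by simp
qed

lemma nu_Upow: assumes ph: "\<phi> \<in> Sp q p" shows "nu q p m ((Uop ^^ N) \<phi>) \<le> (1 + real N) ^ m * nu q p m \<phi>"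
proof -
  have "bnd m ((\<Sum>i\<le>N. \<bar>bet N i\<bar>) * nu q p m \<phi>) (0 + N) (Opn N (bet N) \<phi>)"
    by (rule Opn_bnd[OF bnd_Sp[OF ph]])
  moreover have "(\<Sum>i\<le>N. \<bar>bet N i\<bar>) = 1" using bet_S0[of N] bet_nonneg by simp
  ultimately have "bnd m (nu q p m \<phi>) N ((Uop ^^ N) \<phi>)"
    using Upow_expand[OF Sp_Z[OF ph]] by simp
  then show ?thesis using nu_le by blast
qed

lemma partB: assumes sc: "seq_cond q p lam T" and big: "cmod lam > gam" and ph: "\<phi> \<in> Sp q p"
  shows "T k \<phi> = 0"
proof -
  obtain M m where M: "M > 0" "\<And>\<phi> k. \<phi> \<in> Sp q p \<Longrightarrow> cmod (T k \<phi>) \<le> M * nu q p m \<phi>"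
    using sc_bound[OF sc] by blast
  define r where "r = cmod lam / gam"
  have r1: "r > 1" unfolding r_def using big gam_pos by simp
  have om: "cmod (lam / of_real gam) = r" unfolding r_def using gam_pos by (simp add: norm_divide)
  have le: "cmod (T k \<phi>) \<le> M * nu q p m \<phi> * ((1 + real N) ^ m / r ^ N)" for N
  proof -
    have "cmod (T k \<phi>) * r ^ N = cmod (T (k + N) ((Uop ^^ N) \<phi>))"
      unfolding T_Upow[OF sc ph] norm_mult norm_power om by simp
    also have "\<dots> \<le> M * nu q p m ((Uop ^^ N) \<phi>)" by (rule M(2)[OF Upow_Sp[OF ph]])
    also have "\<dots> \<le> M * ((1 + real N) ^ m * nu q p m \<phi>)"
      using nu_Upow[OF ph] M(1) by (intro mult_left_mono) auto
    finally show ?thesis using r1 by (simp add: field_simps)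
  qed
  have lim: "(\<lambda>N. M * nu q p m \<phi> * ((1 + real N) ^ m / r ^ N)) \<longlonglongrightarrow> M * nu q p m \<phi> * 0"
    by (intro tendsto_mult tendsto_const poly_geo_lim r1)
  have "cmod (T k \<phi>) \<le> 0"
    using LIMSEQ_le_const[OF lim, of "cmod (T k \<phi>)"] le by auto
  then show ?thesis by simp
qed

end

context tp begin

lemma Uop_add: "Uop (\<lambda>x. f x + g x) = (\<lambda>x. Uop f x + Uop g x)"
proof
  fix x show "Uop (\<lambda>x. f x + g x) x = Uop f x + Uop g x"
    unfolding Uop_def lap_def by (cases "x \<in> V") (simp_all add: sum.distrib add_divide_distrib diff_divide_distrib distrib_left)
qed

lemma Dop_add: "Dop (\<lambda>x. f x + g x) = (\<lambda>x. Dop f x + Dop g x)"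
  unfolding Dop_def Uop_add by auto

lemma Dpow_add: "(Dop ^^ i) (\<lambda>x. f x + g x) = (\<lambda>x. (Dop ^^ i) f x + (Dop ^^ i) g x)"
  by (induction i) (simp_all add: Dop_add)

lemma Uop_DI: "Uop f = (\<lambda>x. Dop f x + f x)" unfolding Dop_def by simp

lemma Dpow_Uop: "(Dop ^^ i) (Uop f) = Uop ((Dop ^^ i) f)"
  by (induction i) (simp_all add: Dop_Uop)

lemma Dpow_Uop2: "(Dop ^^ i) (Uop f) = (\<lambda>x. (Dop ^^ Suc i) f x + (Dop ^^ i) f x)"
proof -
  have "(Dop ^^ i) (Uop f) = (\<lambda>x. (Dop ^^ i) (Dop f) x + (Dop ^^ i) f x)"
    by (subst Uop_DI) (rule Dpow_add)
  also have "(Dop ^^ i) (Dop f) = (Dop ^^ Suc i) f" by (simp add: funpow_Suc_right del: funpow.simps)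
  finally show ?thesis .
qed

lemma partA_base:
  assumes sc: "seq_cond q p lam T" and eq: "cmod lam = gam"
    and M: "M > 0" "\<And>\<phi> k. \<phi> \<in> Sp q p \<Longrightarrow> cmod (T k \<phi>) \<le> M * nu q p m \<phi>"
    and ph: "\<phi> \<in> Sp q p"
  shows "T k ((Dop ^^ (2 * m + 2)) \<phi>) = 0"
proof -
  define K where "K = 2 * m + 2"
  define \<psi> where "\<psi> = (Dop ^^ K) \<phi>"
  have psi: "\<psi> \<in> Sp q p" unfolding \<psi>_def by (rule Dpow_Sp[OF ph])
  have om: "cmod (lam / of_real gam) = 1" using eq gam_pos by (simp add: norm_divide)
  define \<nu> where "\<nu> = nu q p m \<phi>"
  have nu0: "\<nu> \<ge> 0" unfolding \<nu>_def by (rule nu_nonneg[OF ph])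
  define C where "C = M * \<nu> * real (K + 1) ^ m * (pp / bb) ^ Suc m"
  have "cmod (T k \<psi>) \<le> C / real (Suc n)" for n
  proof -
    define s where "s = real (Suc n)"
    have s0: "s > 0" unfolding s_def by simp
    define A where "A = (1 + real (K * Suc n)) ^ m"
    define A' where "A' = (real (K + 1) * s) ^ m"
    define L where "L = l1 n ^ K"
    define L' where "L' = (pp / (s * bb)) ^ Suc m"
    have T1: "T (k + n * K) ((Uop ^^ (n * K)) \<psi>) = (lam / of_real gam) ^ (n * K) * T k \<psi>"
      by (rule T_Upow[OF sc psi])
    have "cmod (T k \<psi>) = cmod (T (k + n * K) ((Uop ^^ (n * K)) \<psi>))"
      unfolding T1 norm_mult norm_power om by simp
    also have "(Uop ^^ (n * K)) \<psi> = (W n ^^ K) \<phi>" unfolding \<psi>_def Wpow_eq ..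
    finally have e1: "cmod (T k \<psi>) = cmod (T (k + n * K) ((W n ^^ K) \<phi>))" .
    have WS: "(W n ^^ K) \<phi> \<in> Sp q p" unfolding Wpow_eq by (intro Upow_Sp Dpow_Sp ph)
    have e2: "cmod (T (k + n * K) ((W n ^^ K) \<phi>)) \<le> M * nu q p m ((W n ^^ K) \<phi>)"
      by (rule M(2)[OF WS])
    have e3: "nu q p m ((W n ^^ K) \<phi>) \<le> A * (L * \<nu>)"
      unfolding \<nu>_def A_def L_def by (rule nu_le[OF Wpow_bnd[OF Sp_Z[OF ph] bnd_Sp[OF ph]]])
    have AA: "A \<le> A'" unfolding A_def A'_def s_def
    proof (rule power_mono)
      show "1 + real (K * Suc n) \<le> real (K + 1) * real (Suc n)" by (simp add: algebra_simps)
    qed simp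
    have LL: "L \<le> L'"
    proof -
      have Ke: "K = 2 * Suc m" unfolding K_def by simp
      have "L = (l1 n ^ 2) ^ Suc m" unfolding L_def Ke by (simp only: power_mult)
      also have "\<dots> \<le> L'" unfolding L'_def s_def by (intro power_mono l1_sq) simp
      finally show ?thesis .
    qed
    have A0: "A \<ge> 0" unfolding A_def by simp
    have L0: "L \<ge> 0" unfolding L_def l1_def by simp
    have e5: "A * (L * \<nu>) \<le> A' * (L' * \<nu>)"
      using AA LL A0 L0 nu0 by (intro mult_mono) (auto intro: mult_right_mono order_trans[OF A0 AA])
    have "cmod (T k \<psi>) \<le> M * nu q p m ((W n ^^ K) \<phi>)" using e1 e2 by simp
    also have "\<dots> \<le> M * (A * (L * \<nu>))" using e3 M(1) by (intro mult_left_mono) auto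
    also have "\<dots> \<le> M * (A' * (L' * \<nu>))" using e5 M(1) by (intro mult_left_mono) auto
    finally have e4: "cmod (T k \<psi>) \<le> M * (A' * (L' * \<nu>))" .
    have key: "M * ((K1 * s) ^ m * ((P / (s * bb)) ^ Suc m * \<nu>)) = M * \<nu> * K1 ^ m * (P / bb) ^ Suc m / s" for K1 P :: real
      using s0 bb_pos by (simp add: power_mult_distrib power_divide field_simps)
    have "M * (A' * (L' * \<nu>)) = C / s" unfolding A'_def L'_def C_def by (rule key)
    then show ?thesis using e4 unfolding s_def by simp
  qed
  then have "T k \<psi> = 0" by (intro zero_if_le_inv)
  then show ?thesis unfolding \<psi>_def K_def .
qed

lemma jordan_step:
  assumes sc: "seq_cond q p lam T" and eq: "cmod lam = gam"
    and M: "M > 0" "\<And>\<phi> k. \<phi> \<in> Sp q p \<Longrightarrow> cmod (T k \<phi>) \<le> M * nu q p m \<phi>"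
    and hyp: "\<forall>k. \<forall>\<phi>\<in>Sp q p. T k ((Dop ^^ Suc (Suc j)) \<phi>) = 0"
  shows "\<forall>k. \<forall>\<phi>\<in>Sp q p. T k ((Dop ^^ Suc j) \<phi>) = 0"
proof (intro allI ballI)
  fix k0 \<phi> assume ph: "\<phi> \<in> Sp q p"
  define om where "om = lam / of_real gam"
  have om1: "cmod om = 1" unfolding om_def using eq gam_pos by (simp add: norm_divide)
  then have om0: "om \<noteq> 0" by auto
  have DS: "\<And>i. (Dop ^^ i) \<phi> \<in> Sp q p" by (rule Dpow_Sp[OF ph])
  have eqA: "T k ((Dop ^^ i) (Uop \<phi>)) = om * T (k - 1) ((Dop ^^ i) \<phi>)" if "k \<ge> 1" for k i
    unfolding Dpow_Uop om_def by (rule T_U[OF sc that DS])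
  have eqB: "T k ((Dop ^^ i) (Uop \<phi>)) = T k ((Dop ^^ Suc i) \<phi>) + T k ((Dop ^^ i) \<phi>)" for k i
    unfolding Dpow_Uop2 by (rule tempered_add[OF sc_temp[OF sc] DS DS])
  define S where "S k = T k ((Dop ^^ Suc j) \<phi>)" for k
  define R where "R k = T k ((Dop ^^ j) \<phi>)" for k
  have Srec: "S (Suc k) = om * S k" for k
  proof -
    have "om * S k = T (Suc k) ((Dop ^^ Suc j) (Uop \<phi>))" unfolding S_def using eqA[of "Suc k" "Suc j"] by simp
    also have "\<dots> = S (Suc k)" unfolding eqB S_def using hyp ph by simp
    finally show ?thesis by simp
  qed
  have Sk: "S k = om ^ k * S 0" for k by (induction k) (simp_all add: Srec)
  have Rrec: "R (Suc k) = om * R k - om ^ Suc k * S 0" for k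
  proof -
    have "om * R k = T (Suc k) ((Dop ^^ j) (Uop \<phi>))" unfolding R_def using eqA[of "Suc k" j] by simp
    also have "\<dots> = S (Suc k) + R (Suc k)" unfolding eqB S_def R_def ..
    finally show ?thesis unfolding Sk[of "Suc k"] by (simp add: algebra_simps)
  qed
  have Rk: "R k = om ^ k * (R 0 - of_nat k * S 0)" for k
  proof (induction k)
    case 0 then show ?case by simp
  next
    case (Suc k)
    have "R (Suc k) = om * (om ^ k * (R 0 - of_nat k * S 0)) - om ^ Suc k * S 0"
      using Rrec[of k] unfolding Suc.IH .
    then show ?case by (simp add: algebra_simps)
  qed
  define B where "B = M * nu q p m ((Dop ^^ j) \<phi>)"
  have RB: "cmod (R k) \<le> B" for k unfolding R_def B_def by (rule M(2)[OF DS])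
  have "cmod (S 0) \<le> (cmod (R 0) + B) / real (Suc n)" for n
  proof -
    have "cmod (R 0 - of_nat (Suc n) * S 0) = cmod (R (Suc n))"
      unfolding Rk[of "Suc n"] by (simp add: norm_mult norm_power om1)
    then have a: "cmod (R 0 - of_nat (Suc n) * S 0) \<le> B" using RB by simp
    have "real (Suc n) * cmod (S 0) = cmod (of_nat (Suc n) * S 0)" by (simp only: norm_mult norm_of_nat)
    also have "\<dots> \<le> cmod (R 0) + cmod (R 0 - of_nat (Suc n) * S 0)"
      using norm_triangle_ineq4[of "R 0" "R 0 - of_nat (Suc n) * S 0"] by simp
    also have "\<dots> \<le> cmod (R 0) + B" using a by simp
    finally have "real (Suc n) * cmod (S 0) \<le> cmod (R 0) + B" .
    then show ?thesis by (simp add: pos_le_divide_eq mult.commute del: of_nat_Suc)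
  qed
  then have "S 0 = 0" by (rule zero_if_le_inv)
  then show "T k0 ((Dop ^^ Suc j) \<phi>) = 0" using Sk[of k0] unfolding S_def by simp
qed

lemma partA: assumes sc: "seq_cond q p lam T" and eq: "cmod lam = gam" and ph: "\<phi> \<in> Sp q p"
  shows "T 0 (lap q \<phi>) = of_real (cmod lam) * T 0 \<phi>"
proof -
  obtain M m where M: "M > 0" "\<And>\<phi> k. \<phi> \<in> Sp q p \<Longrightarrow> cmod (T k \<phi>) \<le> M * nu q p m \<phi>"
    using sc_bound[OF sc] by blast
  define P where "P j = (\<forall>k. \<forall>\<phi>\<in>Sp q p. T k ((Dop ^^ Suc j) \<phi>) = 0)" for j
  have base: "P (2 * m + 1)" unfolding P_def
    using partA_base[OF sc eq M] by (simp add: numeral_2_eq_2)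
  have "P 0"
  proof (rule inc_induct[of 0 "2 * m + 1" P])
    show "P (2 * m + 1)" by (rule base)
  next
    fix n assume "0 \<le> n" "n < 2 * m + 1" "P (Suc n)"
    then have "\<forall>k. \<forall>\<phi>\<in>Sp q p. T k ((Dop ^^ Suc (Suc n)) \<phi>) = 0" unfolding P_def by blast
    note J = jordan_step[OF sc eq M(1) M(2) this]
    then show "P n" unfolding P_def by blast
  qed simp
  then have "T 0 (Dop \<phi>) = 0" unfolding P_def using ph by simp
  then have "T 0 (Uop \<phi>) - T 0 \<phi> = 0" unfolding Dop_def
    using tempered_diff[OF sc_temp[OF sc] Uop_Sp[OF ph] ph] by simp
  then have "T 0 (Uop \<phi>) = T 0 \<phi>" by simp
  moreover have "T 0 (lap q \<phi>) = of_real gam * T 0 (Uop \<phi>)"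
    unfolding lap_Uop by (rule tempered_scale[OF sc_temp[OF sc] Uop_Sp[OF ph]])
  ultimately show ?thesis using eq by simp
qed

end

context tp begin

definition Sph :: "nat \<Rightarrow> nat list set" where
  "Sph n = {x \<in> V. length x = n}"

lemma V_entries: assumes "x \<in> V" shows "set x \<subseteq> {..q}"
proof
  fix a assume "a \<in> set x"
  then obtain i where i: "i < length x" "a = x ! i" by (auto simp: in_set_conv_nth)
  have "if i = 0 then x ! i < q + 1 else x ! i < q" using assms i(1) unfolding tree_vertices_def by blast
  then have "x ! i \<le> q" by (auto split: if_splits)
  then show "a \<in> {..q}" using i by simp
qed

lemma finite_Sph: "finite (Sph n)"
proof (rule finite_subset)
  show "Sph n \<subseteq> {xs. set xs \<subseteq> {..q} \<and> length xs = n}" unfolding Sph_def using V_entries by auto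
  show "finite {xs. set xs \<subseteq> {..q} \<and> length xs = n}" by (rule finite_lists_length_eq) simp
qed

lemma Sph_0: "Sph 0 = {[]}" unfolding Sph_def using root_V by auto

lemma Sph_Suc: "Sph (Suc n) = (\<lambda>(y, a). y @ [a]) ` (SIGMA y:Sph n. {..<lmt q y})"
proof (intro set_eqI iffI)
  fix x assume x: "x \<in> Sph (Suc n)"
  then have "x \<noteq> []" unfolding Sph_def by auto
  then have e: "x = butlast x @ [last x]" by simp
  have "butlast x @ [last x] \<in> V" using x e unfolding Sph_def by auto
  then have "butlast x \<in> V" "last x < lmt q (butlast x)" by (auto simp: snoc_in_V)
  moreover have "length (butlast x) = n" using x unfolding Sph_def by auto
  ultimately show "x \<in> (\<lambda>(y, a). y @ [a]) ` (SIGMA y:Sph n. {..<lmt q y})"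
    unfolding Sph_def by (intro image_eqI[of _ _ "(butlast x, last x)"]) (use e in auto)
next
  fix x assume "x \<in> (\<lambda>(y, a). y @ [a]) ` (SIGMA y:Sph n. {..<lmt q y})"
  then show "x \<in> Sph (Suc n)" unfolding Sph_def by (auto simp: snoc_in_V)
qed

lemma inj_snoc: "inj_on (\<lambda>(y, a). y @ [a]) A" by (auto simp: inj_on_def)

lemma sum_Sph_Suc: "(\<Sum>x\<in>Sph (Suc n). f x) = (\<Sum>y\<in>Sph n. \<Sum>a<lmt q y. f (y @ [a]))"
proof -
  have a: "(\<Sum>y\<in>Sph n. \<Sum>a<lmt q y. f (y @ [a])) = (\<Sum>(y, a)\<in>(SIGMA y:Sph n. {..<lmt q y}). f (y @ [a]))"
    by (rule sum.Sigma) (auto simp: finite_Sph)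
  have b: "(\<Sum>x\<in>Sph (Suc n). f x) = (\<Sum>z\<in>(SIGMA y:Sph n. {..<lmt q y}). f ((\<lambda>(y, a). y @ [a]) z))"
    unfolding Sph_Suc sum.reindex[OF inj_snoc] comp_def ..
  have c: "(\<lambda>z. f ((\<lambda>(y, a). y @ [a]) z)) = (\<lambda>(y, a). f (y @ [a]))" by auto
  show ?thesis unfolding a b c ..
qed

lemma lmt_Sph: "y \<in> Sph n \<Longrightarrow> lmt q y = (if n = 0 then q + 1 else q)"
  unfolding Sph_def lmt_def by auto

lemma card_Sph: "real (card (Sph n)) \<le> (Q + 1) * Q ^ n"
proof (induction n)
  case 0 then show ?case by (simp add: Sph_0)
next
  case (Suc n)
  have "card (Sph (Suc n)) = (\<Sum>x\<in>Sph (Suc n). (1::nat))" by (simp only: card_eq_sum)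
  also have "\<dots> = (\<Sum>y\<in>Sph n. \<Sum>a<lmt q y. (1::nat))" by (rule sum_Sph_Suc)
  also have "\<dots> = (\<Sum>y\<in>Sph n. lmt q y)" by simp
  also have "\<dots> = card (Sph n) * (if n = 0 then q + 1 else q)" using lmt_Sph[of _ n] by simp
  finally have c: "real (card (Sph (Suc n))) = real (card (Sph n)) * (if n = 0 then Q + 1 else Q)" by simp
  show ?case
  proof (cases "n = 0")
    case True then show ?thesis using c Q_gt1 by (simp add: Sph_0)
  next
    case False
    then have "real (card (Sph (Suc n))) = real (card (Sph n)) * Q" using c by simp
    also have "\<dots> \<le> (Q + 1) * Q ^ n * Q" using Suc Q_gt1 by (intro mult_right_mono) auto
    finally show ?thesis by (simp add: algebra_simps)
  qed
qed

definition Phi :: "(nat list \<Rightarrow> complex) \<Rightarrow> nat \<Rightarrow> complex" where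
  "Phi f n = (\<Sum>x\<in>Sph n. f x)"

lemma Sph_V: "x \<in> Sph n \<Longrightarrow> x \<in> V" and Sph_len: "x \<in> Sph n \<Longrightarrow> length x = n"
  unfolding Sph_def by auto

lemma nbr_sum_Sph: "(\<Sum>x\<in>Sph n. \<Sum>y\<in>tree_neighbors q x. f y) =
   (if n = 0 then 0 else of_nat (if n = 1 then q + 1 else q) * Phi f (n - 1)) + Phi f (Suc n)"
proof -
  have "(\<Sum>x\<in>Sph n. \<Sum>y\<in>tree_neighbors q x. f y) =
     (\<Sum>x\<in>Sph n. (if x = [] then 0 else f (butlast x))) + (\<Sum>x\<in>Sph n. \<Sum>a<lmt q x. f (x @ [a]))"
    by (simp add: nbrs_sum Sph_V sum.distrib)
  also have "(\<Sum>x\<in>Sph n. \<Sum>a<lmt q x. f (x @ [a])) = Phi f (Suc n)"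
    unfolding Phi_def sum_Sph_Suc ..
  also have "(\<Sum>x\<in>Sph n. (if x = [] then 0 else f (butlast x))) =
     (if n = 0 then 0 else of_nat (if n = 1 then q + 1 else q) * Phi f (n - 1))"
  proof (cases n)
    case 0 then show ?thesis by (simp add: Sph_0)
  next
    case (Suc k)
    have "(\<Sum>x\<in>Sph (Suc k). (if x = [] then 0 else f (butlast x))) = (\<Sum>y\<in>Sph k. \<Sum>a<lmt q y. f y)"
      unfolding sum_Sph_Suc by simp
    also have "\<dots> = (\<Sum>y\<in>Sph k. of_nat (if k = 0 then q + 1 else q) * f y)"
      by (intro sum.cong refl) (simp add: lmt_Sph)
    also have "\<dots> = of_nat (if k = 0 then q + 1 else q) * Phi f k"
      unfolding Phi_def by (simp add: sum_distrib_left)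
    finally show ?thesis using Suc by simp
  qed
  finally show ?thesis by simp
qed

lemma Phi_lap: "Phi (lap q f) n = Phi f n - (1 / (of_nat q + 1)) *
   ((if n = 0 then 0 else of_nat (if n = 1 then q + 1 else q) * Phi f (n - 1)) + Phi f (Suc n))"
proof -
  have "Phi (lap q f) n = (\<Sum>x\<in>Sph n. f x - 1 / (of_nat q + 1) * (\<Sum>y\<in>tree_neighbors q x. f y))"
    unfolding Phi_def lap_def by (intro sum.cong refl) (simp add: Sph_V)
  also have "\<dots> = Phi f n - 1 / (of_nat q + 1) * (\<Sum>x\<in>Sph n. \<Sum>y\<in>tree_neighbors q x. f y)"
    unfolding Phi_def by (simp add: sum_subtractf sum_distrib_left)
  finally show ?thesis unfolding nbr_sum_Sph .
qed

lemma Phi_bound: assumes "f \<in> Sp q p"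
  shows "cmod (Phi f n) \<le> (Q + 1) * nu q p 2 f * (Q ^ n * Q powr (- real n / p)) / (1 + real n) ^ 2"
proof -
  have "cmod (Phi f n) \<le> (\<Sum>x\<in>Sph n. cmod (f x))" unfolding Phi_def by (rule norm_sum)
  also have "\<dots> \<le> (\<Sum>x\<in>Sph n. nu q p 2 f * (Q powr (- real n / p) / (1 + real n) ^ 2))"
  proof (rule sum_mono)
    fix x assume x: "x \<in> Sph n"
    have "cmod (f x) \<le> nu q p 2 f * env 2 0 x" using bnd_Sp[OF assms, of 2] unfolding bnd_def by blast
    then show "cmod (f x) \<le> nu q p 2 f * (Q powr (- real n / p) / (1 + real n) ^ 2)"
      unfolding env_def G_def using Sph_len[OF x] by simp
  qed
  also have "\<dots> = real (card (Sph n)) * (nu q p 2 f * (Q powr (- real n / p) / (1 + real n) ^ 2))" by simp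
  also have "\<dots> \<le> ((Q + 1) * Q ^ n) * (nu q p 2 f * (Q powr (- real n / p) / (1 + real n) ^ 2))"
    using card_Sph nu_nonneg[OF assms] by (intro mult_right_mono) auto
  finally show ?thesis by (simp add: field_simps)
qed

end

lemma summ_sq: "summable (\<lambda>n. 1 / (1 + real n) ^ 2)"
proof -
  have lim: "(\<lambda>n. 1 / (real n + 1)) \<longlonglongrightarrow> 0" by real_asymp
  have s: "summable (\<lambda>n. 1 / (real n + 1) - 1 / (real (Suc n) + 1))"
    by (rule telescope_summable'[OF lim])
  have s2: "summable (\<lambda>n. 2 * (1 / (real n + 1) - 1 / (real (Suc n) + 1)))"
    by (rule summable_mult[OF s])
  show ?thesis
  proof (rule summable_comparison_test'[OF s2])
    fix n :: nat assume "n \<ge> 0"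
    have e: "2 * (1 / (real n + 1) - 1 / (real (Suc n) + 1)) = 2 / ((real n + 1) * (real n + 2))"
      by (simp add: field_simps)
    have "1 / (1 + real n) ^ 2 = 2 / (2 * (1 + real n) ^ 2)" by simp
    also have "\<dots> \<le> 2 / ((real n + 1) * (real n + 2))"
    proof (rule frac_le)
      show "0 < (real n + 1) * (real n + 2)" by simp
      show "(real n + 1) * (real n + 2) \<le> 2 * (1 + real n) ^ 2" by (simp add: power2_eq_square algebra_simps)
    qed simp_all
    finally have "1 / (1 + real n) ^ 2 \<le> 2 * (1 / (real n + 1) - 1 / (real (Suc n) + 1))" unfolding e .
    then show "norm (1 / (1 + real n) ^ 2) \<le> 2 * (1 / (real n + 1) - 1 / (real (Suc n) + 1))" by simp
  qed
qed

context tp begin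

definition bq :: real where "bq = 1 - 1 / p"

lemma Qpow_eq: "Q ^ n * Q powr (- real n / p) = Q powr (real n * bq)"
proof -
  have "Q ^ n = Q powr real n" using Q_gt1 by (simp add: powr_realpow)
  then have "Q ^ n * Q powr (- real n / p) = Q powr real n * Q powr (- real n / p)" by simp
  also have "\<dots> = Q powr (real n + - real n / p)" by (rule powr_add[symmetric])
  also have "real n + - real n / p = real n * bq" unfolding bq_def by (simp add: algebra_simps)
  finally show ?thesis .
qed

definition pr :: "(nat \<Rightarrow> complex) \<Rightarrow> (nat list \<Rightarrow> complex) \<Rightarrow> complex" where
  "pr g f = (\<Sum>n. g n * Phi f n)"

lemma gPhi_bound:
  assumes gb: "\<And>n. cmod (g n) \<le> Cg * Q powr (- bq * real n)" and f: "f \<in> Sp q p"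
  shows "cmod (g a * Phi f b) \<le> Cg * (Q + 1) * nu q p 2 f * Q powr (bq * (real b - real a)) / (1 + real b) ^ 2"
proof -
  have nn: "0 \<le> Cg * Q powr (- bq * real a)" using order_trans[OF norm_ge_zero gb[of a]] .
  have "cmod (g a * Phi f b) = cmod (g a) * cmod (Phi f b)" by (simp add: norm_mult)
  also have "\<dots> \<le> (Cg * Q powr (- bq * real a)) * ((Q + 1) * nu q p 2 f * Q powr (real b * bq) / (1 + real b) ^ 2)"
    using Phi_bound[OF f, of b] unfolding Qpow_eq
    by (intro mult_mono gb nn) auto
  also have "\<dots> = Cg * (Q + 1) * nu q p 2 f * (Q powr (- bq * real a) * Q powr (real b * bq)) / (1 + real b) ^ 2"
    by simp
  also have "Q powr (- bq * real a) * Q powr (real b * bq) = Q powr (bq * (real b - real a))"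
    by (simp add: powr_add[symmetric] algebra_simps)
  finally show ?thesis .
qed

lemma summ_gen: assumes "\<And>n. cmod (h n) \<le> K / (1 + real n) ^ 2"
  shows "summable h" "summable (\<lambda>n. cmod (h n))"
proof -
  have s: "summable (\<lambda>n. K * (1 / (1 + real n) ^ 2))" by (rule summable_mult[OF summ_sq])
  show "summable h" by (rule summable_comparison_test'[OF s]) (use assms in simp)
  show "summable (\<lambda>n. cmod (h n))" by (rule summable_comparison_test'[OF s]) (use assms in simp)
qed

context
  fixes g :: "nat \<Rightarrow> complex" and Cg :: real
  assumes gb: "\<And>n. cmod (g n) \<le> Cg * Q powr (- bq * real n)"
begin

lemma b0: "f \<in> Sp q p \<Longrightarrow> cmod (g n * Phi f n) \<le> (Cg * (Q + 1) * nu q p 2 f) / (1 + real n) ^ 2"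
  using gPhi_bound[OF gb, of f n n] q2 by simp

lemma b1: assumes "f \<in> Sp q p" shows "cmod (g n * Phi f (Suc n)) \<le> (Cg * (Q + 1) * nu q p 2 f * Q powr bq) / (1 + real n) ^ 2"
proof -
  have h: "cmod (g n * Phi f (Suc n)) \<le> Cg * (Q + 1) * nu q p 2 f * Q powr bq / (1 + real (Suc n)) ^ 2"
    using gPhi_bound[OF gb assms, of n "Suc n"] by simp
  have "0 \<le> Cg * (Q + 1) * nu q p 2 f * Q powr bq / (1 + real (Suc n)) ^ 2"
    using order_trans[OF norm_ge_zero h] .
  then have K0: "0 \<le> Cg * (Q + 1) * nu q p 2 f * Q powr bq" by (simp add: zero_le_divide_iff)
  have "cmod (g n * Phi f (Suc n)) \<le> Cg * (Q + 1) * nu q p 2 f * Q powr bq / (1 + real (Suc n)) ^ 2"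
    using gPhi_bound[OF gb assms, of n "Suc n"] by simp
  also have "\<dots> \<le> Cg * (Q + 1) * nu q p 2 f * Q powr bq / (1 + real n) ^ 2"
    using K0 by (intro divide_left_mono) auto
  finally show ?thesis .
qed

lemma b2: assumes "f \<in> Sp q p" shows "cmod (g (Suc n) * Phi f n) \<le> (Cg * (Q + 1) * nu q p 2 f * Q powr (- bq)) / (1 + real n) ^ 2"
  using gPhi_bound[OF gb assms, of "Suc n" n] by simp

lemma pr_summ: "f \<in> Sp q p \<Longrightarrow> summable (\<lambda>n. g n * Phi f n)"
  by (rule summ_gen(1)[OF b0])

lemma pr_bound: assumes f: "f \<in> Sp q p"
  shows "cmod (pr g f) \<le> Cg * (Q + 1) * (\<Sum>n. 1 / (1 + real n) ^ 2) * nu q p 2 f"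
proof -
  have "cmod (pr g f) \<le> (\<Sum>n. cmod (g n * Phi f n))"
    unfolding pr_def by (rule summable_norm[OF summ_gen(2)[OF b0[OF f]]])
  also have "\<dots> \<le> (\<Sum>n. (Cg * (Q + 1) * nu q p 2 f) * (1 / (1 + real n) ^ 2))"
    by (rule suminf_le) (use b0[OF f] summ_gen(2)[OF b0[OF f]] summable_mult[OF summ_sq] in auto)
  also have "\<dots> = Cg * (Q + 1) * (\<Sum>n. 1 / (1 + real n) ^ 2) * nu q p 2 f"
    by (subst suminf_mult[OF summ_sq]) simp
  finally show ?thesis .
qed

lemma Phi_add: "Phi (\<lambda>x. f1 x + f2 x) n = Phi f1 n + Phi f2 n"
  unfolding Phi_def by (simp add: sum.distrib)

lemma Phi_scale: "Phi (\<lambda>x. c * f x) n = c * Phi f n"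
  unfolding Phi_def by (simp add: sum_distrib_left)

lemma pr_add: assumes "f1 \<in> Sp q p" "f2 \<in> Sp q p" shows "pr g (\<lambda>x. f1 x + f2 x) = pr g f1 + pr g f2"
  unfolding pr_def Phi_add distrib_left
  by (rule suminf_add[symmetric, OF pr_summ[OF assms(1)] pr_summ[OF assms(2)]])

lemma pr_scale: assumes "f \<in> Sp q p" shows "pr g (\<lambda>x. c * f x) = c * pr g f"
proof -
  have "pr g (\<lambda>x. c * f x) = (\<Sum>n. c * (g n * Phi f n))" unfolding pr_def Phi_scale by (simp add: mult_ac)
  also have "\<dots> = c * pr g f" unfolding pr_def by (rule suminf_mult[OF pr_summ[OF assms]])
  finally show ?thesis .
qed

lemma pr_lap: assumes f: "f \<in> Sp q p" and E0: "g 0 - g 1 = \<mu> * g 0"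
    and E1: "\<And>k. g (Suc k) - (g k + of_nat q * g (Suc (Suc k))) / (of_nat q + 1) = \<mu> * g (Suc k)"
  shows "pr g (lap q f) = \<mu> * pr g f"
proof -
  define a where "a = Phi f"
  define c :: "nat \<Rightarrow> complex" where "c j = of_nat (if j = 0 then q + 1 else q)" for j
  define h1 where "h1 n = g n * a n" for n
  define h2 where "h2 n = g n * a (Suc n)" for n
  define h3 where "h3 n = g n * (if n = 0 then 0 else c (n - 1) * a (n - 1))" for n
  define v where "v j = (if j = 0 then 0 else g (j - 1) * a j)" for j
  have qq: "(of_nat q + 1 :: complex) \<noteq> 0" by (metis of_nat_Suc of_nat_eq_0_iff add.commute plus_1_eq_Suc nat.distinct(1))
  have t: "g n * Phi (lap q f) n = h1 n - 1 / (of_nat q + 1) * (h3 n + h2 n)" for n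
    unfolding Phi_lap h1_def h2_def h3_def a_def c_def
    by (cases n) (auto simp: algebra_simps)
  have s1: "summable h1" unfolding h1_def a_def by (rule pr_summ[OF f])
  have s2: "summable h2" unfolding h2_def a_def by (rule summ_gen(1)[OF b1[OF f]])
  have h3S: "h3 (Suc j) = c j * (g (Suc j) * a j)" for j unfolding h3_def by simp
  have s3': "summable (\<lambda>j. h3 (Suc j))"
  proof -
    have "summable (\<lambda>j. cmod (g (Suc j) * a j))" unfolding a_def by (rule summ_gen(2)[OF b2[OF f]])
    then have "summable (\<lambda>j. real (q + 1) * cmod (g (Suc j) * a j))" by (rule summable_mult)
    then show ?thesis
    proof (rule summable_comparison_test'[where N=0])
      fix j :: nat assume "j \<ge> 0"
      have "cmod (h3 (Suc j)) = cmod (c j) * cmod (g (Suc j) * a j)" unfolding h3S norm_mult ..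
      also have "\<dots> \<le> real (q + 1) * cmod (g (Suc j) * a j)"
        unfolding c_def by (intro mult_right_mono) auto
      finally show "norm (h3 (Suc j)) \<le> real (q + 1) * cmod (g (Suc j) * a j)" by simp
    qed
  qed
  have s3: "summable h3" using s3' by (simp add: summable_Suc_iff)
  have sv: "summable v" using s2 unfolding summable_Suc_iff[of v, symmetric] h2_def v_def by simp
  have e3: "suminf h3 = (\<Sum>j. h3 (Suc j))" using suminf_split_head[OF s3] by (simp add: h3_def)
  have e2: "suminf h2 = suminf v"
  proof -
    have "(\<Sum>n. v (Suc n)) = suminf v - v 0" by (rule suminf_split_head[OF sv])
    moreover have "(\<lambda>n. v (Suc n)) = h2" unfolding v_def h2_def by auto
    ultimately show ?thesis by (simp add: v_def)
  qed
  define C where "C = 1 / (of_nat q + 1 :: complex)"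
  have sum23: "summable (\<lambda>n. C * (h3 n + h2 n))" by (intro summable_mult summable_add s3 s2)
  have sum23': "summable (\<lambda>j. C * (h3 (Suc j) + v j))" by (intro summable_mult summable_add s3' sv)
  have "pr g (lap q f) = (\<Sum>n. h1 n - C * (h3 n + h2 n))"
    unfolding pr_def t C_def ..
  also have "\<dots> = suminf h1 - (\<Sum>n. C * (h3 n + h2 n))" by (rule suminf_diff[symmetric, OF s1 sum23])
  also have "(\<Sum>n. C * (h3 n + h2 n)) = C * (\<Sum>n. h3 n + h2 n)" by (rule suminf_mult[OF summable_add[OF s3 s2]])
  also have "(\<Sum>n. h3 n + h2 n) = suminf h3 + suminf h2" by (rule suminf_add[symmetric, OF s3 s2])
  also have "suminf h3 + suminf h2 = (\<Sum>j. h3 (Suc j)) + suminf v" unfolding e3 e2 ..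
  also have "(\<Sum>j. h3 (Suc j)) + suminf v = (\<Sum>j. h3 (Suc j) + v j)" by (rule suminf_add[OF s3' sv])
  also have "C * (\<Sum>j. h3 (Suc j) + v j) = (\<Sum>j. C * (h3 (Suc j) + v j))" by (rule suminf_mult[symmetric, OF summable_add[OF s3' sv]])
  also have "suminf h1 - (\<Sum>j. C * (h3 (Suc j) + v j)) = (\<Sum>j. h1 j - C * (h3 (Suc j) + v j))" by (rule suminf_diff[OF s1 sum23'])
  also have "\<dots> = (\<Sum>j. \<mu> * h1 j)"
  proof (rule arg_cong[where f=suminf], rule ext)
    fix j show "h1 j - C * (h3 (Suc j) + v j) = \<mu> * h1 j"
    proof (cases j)
      case 0
      have "h1 j - C * (h3 (Suc j) + v j) = (g 0 - g 1) * a 0"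
        unfolding 0 h1_def h3S v_def c_def C_def using qq by (simp add: field_simps)
      then show ?thesis unfolding E0 h1_def 0 by simp
    next
      case (Suc k)
      have "h1 j - C * (h3 (Suc j) + v j) = (g (Suc k) - (g k + of_nat q * g (Suc (Suc k))) / (of_nat q + 1)) * a (Suc k)"
        unfolding Suc h1_def h3S v_def c_def C_def using qq by (simp add: field_simps)
      then show ?thesis unfolding E1 h1_def Suc by simp
    qed
  qed
  also have "\<dots> = \<mu> * pr g f" unfolding pr_def h1_def a_def by (rule suminf_mult[OF pr_summ[OF f]])
  finally show ?thesis .
qed

end

end

context tp begin

lemma delta_cp: "delta (conj_exp p) = 1/2 - 1/p"
  unfolding delta_def conj_exp_def using p1 by (simp add: field_simps)

lemma tau_ln: "tau q * ln Q = 2 * pi"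
  unfolding tau_def using Q_gt1 by simp

lemma Re_div_q: "Re (z / (of_nat q + 1)) = Re z / (Q + 1)"
proof -
  have "(of_nat q + 1 :: complex) = of_real (Q + 1)" by simp
  then show ?thesis by (simp add: Re_divide_of_real)
qed

lemma gamma_top: "Re (gamma_fn q (of_real (tau q / 2) + \<i> * of_real (delta (conj_exp p)))) = gam"
proof -
  define L where "L = ln Q"
  define w where "w = of_real (tau q / 2) + \<i> * of_real (delta (conj_exp p))"
  define z1 where "z1 = (1/2 + \<i> * w) * of_real L"
  define z2 where "z2 = (1/2 - \<i> * w) * of_real L"
  have Re1: "Re z1 = L / p" and Im1: "Im z1 = pi"
    unfolding z1_def w_def L_def using tau_ln by (simp_all add: delta_cp field_simps)
  have Re2: "Re z2 = (1 - 1/p) * L" and Im2: "Im z2 = - pi"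
    unfolding z2_def w_def L_def using tau_ln by (simp_all add: delta_cp field_simps)
  have e1: "exp (L / p) = Q powr (1/p)" unfolding L_def powr_def using Q_gt1 by simp
  have e2: "exp ((1 - 1/p) * L) = Q powr (1 - 1/p)" unfolding L_def powr_def using Q_gt1 by (simp add: mult.commute)
  have "Re (gamma_fn q w) = 1 - (Re (exp z1) + Re (exp z2)) / (Q + 1)"
    unfolding gamma_fn_def z1_def z2_def L_def by (simp add: Re_div_q)
  also have "\<dots> = gam" unfolding Re_exp Re1 Im1 Re2 Im2 e1 e2 gam_def g1_def using Q_gt1 by (simp add: field_simps)
  finally show ?thesis unfolding w_def .
qed

lemma gamma_bot: "Re (gamma_fn q (\<i> * of_real (delta (conj_exp p)))) = 1 - g1"
proof -
  define L where "L = ln Q"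
  define w where "w = \<i> * of_real (delta (conj_exp p))"
  define z1 where "z1 = (1/2 + \<i> * w) * of_real L"
  define z2 where "z2 = (1/2 - \<i> * w) * of_real L"
  have Re1: "Re z1 = L / p" and Im1: "Im z1 = 0"
    unfolding z1_def w_def L_def by (simp_all add: delta_cp field_simps)
  have Re2: "Re z2 = (1 - 1/p) * L" and Im2: "Im z2 = 0"
    unfolding z2_def w_def L_def by (simp_all add: delta_cp field_simps)
  have e1: "exp (L / p) = Q powr (1/p)" unfolding L_def powr_def using Q_gt1 by simp
  have e2: "exp ((1 - 1/p) * L) = Q powr (1 - 1/p)" unfolding L_def powr_def using Q_gt1 by (simp add: mult.commute)
  have "Re (gamma_fn q w) = 1 - (Re (exp z1) + Re (exp z2)) / (Q + 1)"
    unfolding gamma_fn_def z1_def z2_def L_def by (simp add: Re_div_q)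
  also have "\<dots> = 1 - g1" unfolding Re_exp Re1 Im1 Re2 Im2 e1 e2 g1_def by simp
  finally show ?thesis unfolding w_def .
qed

lemma g1_le1: "g1 \<le> 1"
proof -
  have a: "Q powr (1/p) \<ge> 1" "Q powr (1 - 1/p) \<ge> 1" using Q_gt1 p1
    by (auto intro!: ge_one_powr_ge_zero simp: field_simps)
  have b: "Q powr (1/p) * Q powr (1 - 1/p) = Q" using Q_gt1 by (simp add: powr_add[symmetric])
  have "0 \<le> (Q powr (1/p) - 1) * (Q powr (1 - 1/p) - 1)" using a by simp
  then have "Q powr (1/p) + Q powr (1 - 1/p) \<le> Q + 1" using b by (simp add: algebra_simps)
  then show ?thesis unfolding g1_def using Q_gt1 by simp
qed

end

context tp begin

lemma bq_le: "bq \<le> 1 / p" unfolding bq_def using p_pos p2 by (simp add: field_simps)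

lemma lin3: fixes c A B :: complex assumes "c + 1 \<noteq> 0"
  shows "(A*a1 + B*b1) - ((A*a0 + B*b0) + c*(A*a2 + B*b2))/(c+1) = A*(a1 - (a0 + c*a2)/(c+1)) + B*(b1 - (b0 + c*b2)/(c+1))"
proof -
  have e: "(A*a0 + B*b0) + c*(A*a2 + B*b2) = A*(a0 + c*a2) + B*(b0 + c*b2)" by (simp add: algebra_simps)
  show ?thesis unfolding e add_divide_distrib times_divide_eq_right[symmetric] by (simp add: algebra_simps)
qed

lemma radial:
  fixes \<rho> :: complex
  assumes rho: "cmod \<rho> = Q powr (-1/p)" and ne: "of_nat q * \<rho>^2 \<noteq> 1"
  shows "\<exists>g Cg. (\<forall>n. cmod (g n) \<le> Cg * Q powr (- bq * real n)) \<and> g 0 = 1 \<and>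
     g 0 - g 1 = (1 - of_nat q / (of_nat q + 1) * (\<rho> + 1 / (of_nat q * \<rho>))) * g 0 \<and>
     (\<forall>k. g (Suc k) - (g k + of_nat q * g (Suc (Suc k))) / (of_nat q + 1) =
        (1 - of_nat q / (of_nat q + 1) * (\<rho> + 1 / (of_nat q * \<rho>))) * g (Suc k))"
proof -
  define qc :: complex where "qc = of_nat q"
  define \<sigma> where "\<sigma> = 1 / (qc * \<rho>)"
  define \<mu> where "\<mu> = 1 - qc / (qc + 1) * (\<rho> + \<sigma>)"
  have qc0: "qc \<noteq> 0" "qc + 1 \<noteq> 0" unfolding qc_def using q2
    by (simp_all, metis of_nat_Suc of_nat_eq_0_iff add.commute plus_1_eq_Suc nat.distinct(1))
  have r0: "\<rho> \<noteq> 0" using rho Q_gt1 by auto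
  have rs: "\<rho> \<noteq> \<sigma>"
  proof
    assume "\<rho> = \<sigma>"
    then have "qc * \<rho> * \<rho> = 1" unfolding \<sigma>_def using qc0 r0 by (simp add: field_simps)
    then show False using ne unfolding qc_def by (simp add: power2_eq_square mult.assoc)
  qed
  define A where "A = (qc / (qc + 1) * (\<rho> + \<sigma>) - \<sigma>) / (\<rho> - \<sigma>)"
  define B where "B = 1 - A"
  define g where "g n = A * \<rho> ^ n + B * \<sigma> ^ n" for n
  have g0: "g 0 = 1" unfolding g_def B_def by simp
  have g1: "g 1 = qc / (qc + 1) * (\<rho> + \<sigma>)"
  proof -
    have "g 1 = A * (\<rho> - \<sigma>) + \<sigma>" unfolding g_def B_def by (simp add: algebra_simps)
    also have "A * (\<rho> - \<sigma>) = qc / (qc + 1) * (\<rho> + \<sigma>) - \<sigma>" unfolding A_def using rs by simp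
    finally show ?thesis by simp
  qed
  have quad: "qc * r ^ 2 + 1 = qc * (\<rho> + \<sigma>) * r" if "r = \<rho> \<or> r = \<sigma>" for r
  proof -
    have "qc * \<rho> * \<sigma> = 1" unfolding \<sigma>_def using qc0 r0 by simp
    then show ?thesis using that by (auto simp: power2_eq_square algebra_simps)
  qed
  have rec1: "r ^ Suc k - (r ^ k + qc * r ^ Suc (Suc k)) / (qc + 1) = \<mu> * r ^ Suc k" if "r = \<rho> \<or> r = \<sigma>" for r k
  proof -
    have "(qc + 1) * (r ^ Suc k - (r ^ k + qc * r ^ Suc (Suc k)) / (qc + 1)) = (qc + 1) * (\<mu> * r ^ Suc k)"
    proof -
      have "(qc + 1) * (r ^ Suc k - (r ^ k + qc * r ^ Suc (Suc k)) / (qc + 1)) = r ^ k * ((qc + 1) * r - (qc * r^2 + 1))"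
        using qc0 by (simp add: field_simps power2_eq_square)
      also have "\<dots> = r ^ k * ((qc + 1) * r - qc * (\<rho> + \<sigma>) * r)" unfolding quad[OF that] ..
      also have "\<dots> = (qc + 1) * (\<mu> * r ^ Suc k)" unfolding \<mu>_def using qc0 by (simp add: field_simps)
      finally show ?thesis .
    qed
    then show ?thesis using qc0 by simp
  qed
  have E1: "g (Suc k) - (g k + qc * g (Suc (Suc k))) / (qc + 1) = \<mu> * g (Suc k)" for k
  proof -
    have "g (Suc k) - (g k + qc * g (Suc (Suc k))) / (qc + 1) =
       A * (\<rho> ^ Suc k - (\<rho> ^ k + qc * \<rho> ^ Suc (Suc k)) / (qc + 1)) + B * (\<sigma> ^ Suc k - (\<sigma> ^ k + qc * \<sigma> ^ Suc (Suc k)) / (qc + 1))"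
      unfolding g_def by (rule lin3[OF qc0(2)])
    also have "\<dots> = A * (\<mu> * \<rho> ^ Suc k) + B * (\<mu> * \<sigma> ^ Suc k)"
      using rec1[of \<rho> k] rec1[of \<sigma> k] by simp
    also have "\<dots> = \<mu> * g (Suc k)" unfolding g_def by (simp add: algebra_simps)
    finally show ?thesis .
  qed
  have E0: "g 0 - g 1 = \<mu> * g 0" unfolding g0 g1 \<mu>_def by simp
  have sig: "cmod \<sigma> = Q powr (- bq)"
  proof -
    have "cmod \<sigma> = 1 / (Q * Q powr (-1/p))" unfolding \<sigma>_def qc_def using rho by (simp add: norm_divide norm_mult)
    also have "Q * Q powr (-1/p) = Q powr bq"
    proof -
      have "Q powr (1 - 1/p) = Q powr 1 * Q powr (-1/p)" by (subst powr_add[symmetric]) simp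
      then show ?thesis unfolding bq_def using Q_gt1 by simp
    qed
    also have "1 / Q powr bq = Q powr (- bq)" by (simp add: powr_minus divide_inverse)
    finally show ?thesis .
  qed
  have bound: "cmod (g n) \<le> (cmod A + cmod B) * Q powr (- bq * real n)" for n
  proof -
    have pr: "cmod \<rho> ^ n = Q powr (- real n / p)"
      unfolding rho using Q_gt1 by (simp add: powr_power)
    have ps: "cmod \<sigma> ^ n = Q powr (- bq * real n)"
      unfolding sig using Q_gt1 by (simp add: powr_power mult.commute)
    have le: "Q powr (- real n / p) \<le> Q powr (- bq * real n)"
    proof (rule powr_mono)
      have "real n * bq \<le> real n * (1 / p)" using bq_le by (intro mult_left_mono) auto
      then show "- real n / p \<le> - bq * real n" by (simp add: mult.commute)
    qed (use Q_gt1 in simp)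
    have "cmod (g n) \<le> cmod A * cmod \<rho> ^ n + cmod B * cmod \<sigma> ^ n"
      unfolding g_def by (metis norm_mult norm_power norm_triangle_ineq)
    also have "\<dots> \<le> cmod A * Q powr (- bq * real n) + cmod B * Q powr (- bq * real n)"
      unfolding pr ps using le by (intro add_mono mult_left_mono) auto
    finally show ?thesis by (simp add: algebra_simps)
  qed
  show ?thesis
    using bound g0 E0 E1 unfolding \<mu>_def \<sigma>_def qc_def by blast
qed

end

context tp begin

definition dlt :: "nat list \<Rightarrow> nat list \<Rightarrow> complex" where
  "dlt x = (\<lambda>y. if y = x then 1 else 0)"

lemma dlt_Sp: assumes "x \<in> V" shows "dlt x \<in> Sp q p"
proof (rule Sp_I)
  show "dlt x \<in> Z" using assms unfolding dlt_def Z_def by auto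
  fix m show "\<exists>C D. bnd m C D (dlt x)"
  proof (intro exI)
    show "bnd m (1 / env m 0 x) 0 (dlt x)" unfolding bnd_def dlt_def
    proof
      fix y
      have e: "env m 0 x > 0" "env m 0 y > 0" using env_pos by auto
      show "cmod (if y = x then 1 else 0) \<le> 1 / env m 0 x * env m 0 y"
        using e by (cases "y = x") (auto simp: less_imp_le)
    qed
  qed
qed

lemma Phi_dlt: assumes "x \<in> V" shows "Phi (dlt x) n = (if n = length x then 1 else 0)"
proof -
  have "Phi (dlt x) n = (if x \<in> Sph n then 1 else 0)"
    unfolding Phi_def dlt_def by (simp add: finite_Sph)
  then show ?thesis using assms unfolding Sph_def by auto
qed

lemma pr_dlt: assumes "x \<in> V" shows "pr g (dlt x) = g (length x)"
proof -
  have "(\<lambda>n. g n * Phi (dlt x) n) = (\<lambda>n. if n = length x then g n else 0)"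
    unfolding Phi_dlt[OF assms] by auto
  then show ?thesis unfolding pr_def using sums_unique[OF sums_single[of "length x" g]] by simp
qed

lemma tempered_of_bound:
  assumes lin: "\<forall>f\<in>Sp q p. \<forall>g\<in>Sp q p. \<forall>c. T (\<lambda>x. f x + g x) = T f + T g \<and> T (\<lambda>x. c * f x) = c * T f"
    and bd: "\<And>\<phi>. \<phi> \<in> Sp q p \<Longrightarrow> cmod (T \<phi>) \<le> K * nu q p 2 \<phi>"
  shows "tempered q p T"
  unfolding tempered_def
proof (intro conjI lin allI impI)
  fix F :: "nat \<Rightarrow> nat list \<Rightarrow> complex"
  assume F: "(\<forall>n. F n \<in> Sp q p) \<and> (\<forall>m. (\<lambda>n. nu q p m (F n)) \<longlonglongrightarrow> 0)"
  have l: "(\<lambda>n. K * nu q p 2 (F n)) \<longlonglongrightarrow> K * 0" using F by (intro tendsto_mult tendsto_const) auto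
  have "(\<lambda>n. cmod (T (F n))) \<longlonglongrightarrow> 0"
    by (rule real_tendsto_sandwich[of "\<lambda>_. 0" _ _ "\<lambda>n. K * nu q p 2 (F n)"]) (use F bd l in auto)
  then show "(\<lambda>n. T (F n)) \<longlonglongrightarrow> 0" by (rule tendsto_norm_zero_cancel)
qed

definition tt :: real where "tt = Q powr (-1/p)"

lemma tt_pos: "tt > 0" unfolding tt_def using Q_gt1 by simp

lemma Qtt: "Q * tt = Q powr (1 - 1/p)"
proof -
  have "Q powr (1 - 1/p) = Q powr 1 * Q powr (-1/p)" by (subst powr_add[symmetric]) simp
  then show ?thesis unfolding tt_def using Q_gt1 by simp
qed

lemma inv_tt: "1 / tt = Q powr (1/p)"
  unfolding tt_def by (simp add: powr_minus divide_inverse)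

lemma Qtt2: "Q * tt ^ 2 < 1"
proof -
  have "Q * tt ^ 2 = Q powr (1 - 1/p) * Q powr (-1/p)" unfolding Qtt[symmetric] tt_def by (simp add: power2_eq_square)
  also have "\<dots> = Q powr (1 - 2/p)" by (simp add: powr_add[symmetric])
  also have "\<dots> < Q powr 0" using Q_gt1 p2 p_pos by (intro powr_less_mono) (auto simp: field_simps)
  finally show ?thesis using Q_gt1 by simp
qed

definition muf :: "real \<Rightarrow> complex" where
  "muf \<theta> = 1 - of_nat q / (of_nat q + 1) * (of_real tt * cis \<theta> + 1 / (of_nat q * (of_real tt * cis \<theta>)))"

definition a1 :: real where "a1 = Q / (Q + 1) * (tt + 1 / (Q * tt))"
definition a2 :: real where "a2 = Q / (Q + 1) * (tt - 1 / (Q * tt))"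

lemma a1_g1: "a1 = g1"
proof -
  have "Q * (tt + 1 / (Q * tt)) = Q * tt + 1 / tt" using Q_gt1 by (simp add: distrib_left)
  then have "a1 = (Q * tt + 1 / tt) / (Q + 1)" unfolding a1_def by simp
  then show ?thesis unfolding Qtt inv_tt g1_def by (simp add: add.commute)
qed

lemma a2_ne: "a2 \<noteq> 0"
proof -
  have "tt - 1 / (Q * tt) \<noteq> 0"
  proof
    assume "tt - 1 / (Q * tt) = 0"
    then have "Q * tt ^ 2 = 1" using Q_gt1 tt_pos by (simp add: field_simps power2_eq_square)
    then show False using Qtt2 by simp
  qed
  then show ?thesis unfolding a2_def using Q_gt1 by simp
qed

lemma muf_eq: "muf \<theta> = Complex (1 - a1 * cos \<theta>) (- a2 * sin \<theta>)"
proof -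
  have inv: "1 / (of_nat q * (of_real tt * cis \<theta>)) = of_real (1 / (Q * tt)) * cis (- \<theta>)"
  proof -
    have cc: "cis \<theta> * cis (-\<theta>) = 1" by (simp add: cis_mult)
    have qt: "Q * tt * (1 / (Q * tt)) = 1" using Q_gt1 tt_pos by simp
    have e: "(of_nat q :: complex) = of_real Q" by simp
    have "(of_nat q * (of_real tt * cis \<theta>)) * (of_real (1 / (Q * tt)) * cis (- \<theta>)) =
        (of_real Q * of_real tt * of_real (1 / (Q * tt))) * (cis \<theta> * cis (-\<theta>))"
      unfolding e by (simp only: mult_ac)
    also have "(of_real Q * of_real tt * of_real (1 / (Q * tt)) :: complex) = of_real (Q * tt * (1 / (Q * tt)))"
      by (simp only: of_real_mult)
    also have "\<dots> = 1" unfolding qt by simp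
    also have "cis \<theta> * cis (-\<theta>) = 1" by (rule cc)
    finally have "(of_nat q * (of_real tt * cis \<theta>)) * (of_real (1 / (Q * tt)) * cis (- \<theta>)) = 1" by simp
    then have "inverse (of_nat q * (of_real tt * cis \<theta>)) = of_real (1 / (Q * tt)) * cis (- \<theta>)"
      by (rule inverse_unique)
    then show ?thesis by (simp add: inverse_eq_divide)
  qed
  have "muf \<theta> = 1 - of_real (Q / (Q + 1)) * (of_real tt * cis \<theta> + of_real (1 / (Q * tt)) * cis (- \<theta>))"
    unfolding muf_def inv by simp
  also have "\<dots> = Complex (1 - a1 * cos \<theta>) (- a2 * sin \<theta>)"
  proof (rule complex_eqI)
    have "Re (1 - of_real (Q / (Q + 1)) * (of_real tt * cis \<theta> + of_real (1 / (Q * tt)) * cis (- \<theta>)))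
        = 1 - Q / (Q + 1) * (tt * cos \<theta> + 1 / (Q * tt) * cos \<theta>)" by simp
    also have "\<dots> = 1 - a1 * cos \<theta>" unfolding a1_def by (simp add: distrib_right)
    finally show "Re (1 - of_real (Q / (Q + 1)) * (of_real tt * cis \<theta> + of_real (1 / (Q * tt)) * cis (- \<theta>))) = Re (Complex (1 - a1 * cos \<theta>) (- a2 * sin \<theta>))" by simp
    have "Im (1 - of_real (Q / (Q + 1)) * (of_real tt * cis \<theta> + of_real (1 / (Q * tt)) * cis (- \<theta>)))
        = - (Q / (Q + 1) * (tt * sin \<theta> - 1 / (Q * tt) * sin \<theta>))" by simp
    also have "\<dots> = - a2 * sin \<theta>" unfolding a2_def by (simp add: left_diff_distrib)
    finally show "Im (1 - of_real (Q / (Q + 1)) * (of_real tt * cis \<theta> + of_real (1 / (Q * tt)) * cis (- \<theta>))) = Im (Complex (1 - a1 * cos \<theta>) (- a2 * sin \<theta>))" by simp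
  qed
  finally show ?thesis .
qed

lemma cmod_muf: "cmod (muf \<theta>) = sqrt ((1 - a1 * cos \<theta>)^2 + (a2 * sin \<theta>)^2)"
  unfolding muf_eq norm_complex_def by simp

lemma ivt_mu: assumes "1 - g1 < r" "r < 1 + g1"
  shows "\<exists>\<theta>. 0 < \<theta> \<and> \<theta> < pi \<and> cmod (muf \<theta>) = r"
proof -
  define F where "F \<theta> = sqrt ((1 - a1 * cos \<theta>)^2 + (a2 * sin \<theta>)^2)" for \<theta>
  have F0: "F 0 = 1 - g1" unfolding F_def a1_g1 using g1_le1 by simp
  have Fpi: "F pi = 1 + g1" unfolding F_def a1_g1 using g1_pos by simp
  have cont: "continuous_on {0..pi} F" unfolding F_def by (intro continuous_intros)
  obtain \<theta> where th: "0 \<le> \<theta>" "\<theta> \<le> pi" "F \<theta> = r"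
    using IVT'[of F 0 r pi, OF _ _ _ cont] F0 Fpi assms by auto
  have "\<theta> \<noteq> 0" using th F0 assms by auto
  moreover have "\<theta> \<noteq> pi" using th Fpi assms by auto
  ultimately show ?thesis using th unfolding F_def cmod_muf[symmetric] by (intro exI[of _ \<theta>]) auto
qed

end

context tp begin

lemma root_V': "[] \<in> V" by (rule root_V)

lemma zero_V: "[0] \<in> V"
  using snoc_in_V[of "[]" 0 q] root_V by (simp add: lmt_def)

lemma partC: assumes lam0: "lam \<noteq> 0" and lo: "1 - g1 < cmod lam" and hi: "cmod lam < 1 + g1"
  shows "\<exists>S. seq_cond q p lam S \<and> \<not> eigendist q p (S 0)"
proof -
  obtain \<theta> where th: "0 < \<theta>" "\<theta> < pi" "cmod (muf \<theta>) = cmod lam"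
    using ivt_mu[OF lo hi] by blast
  define \<rho>1 where "\<rho>1 = of_real tt * cis \<theta>"
  define \<rho>2 where "\<rho>2 = of_real tt * cis (- \<theta>)"
  define \<mu>1 where "\<mu>1 = muf \<theta>"
  define \<mu>2 where "\<mu>2 = muf (- \<theta>)"
  have nr: "cmod \<rho>1 = Q powr (-1/p)" "cmod \<rho>2 = Q powr (-1/p)"
    unfolding \<rho>1_def \<rho>2_def tt_def by (simp_all add: norm_mult)
  have nq: "of_nat q * \<rho>1^2 \<noteq> 1" "of_nat q * \<rho>2^2 \<noteq> 1"
  proof -
    have "cmod (of_nat q * \<rho>1^2) = Q * tt^2" "cmod (of_nat q * \<rho>2^2) = Q * tt^2"
      unfolding \<rho>1_def \<rho>2_def using tt_pos by (simp_all add: norm_mult norm_power)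
    then show "of_nat q * \<rho>1^2 \<noteq> 1" "of_nat q * \<rho>2^2 \<noteq> 1" using Qtt2 by auto
  qed
  obtain g1' C1 where G1: "\<And>n. cmod (g1' n) \<le> C1 * Q powr (- bq * real n)" "g1' 0 = 1"
    "g1' 0 - g1' 1 = \<mu>1 * g1' 0"
    "\<And>k. g1' (Suc k) - (g1' k + of_nat q * g1' (Suc (Suc k))) / (of_nat q + 1) = \<mu>1 * g1' (Suc k)"
    using radial[OF nr(1) nq(1)] unfolding \<mu>1_def muf_def \<rho>1_def by blast
  obtain g2' C2 where G2: "\<And>n. cmod (g2' n) \<le> C2 * Q powr (- bq * real n)" "g2' 0 = 1"
    "g2' 0 - g2' 1 = \<mu>2 * g2' 0"
    "\<And>k. g2' (Suc k) - (g2' k + of_nat q * g2' (Suc (Suc k))) / (of_nat q + 1) = \<mu>2 * g2' (Suc k)"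
    using radial[OF nr(2) nq(2)] unfolding \<mu>2_def muf_def \<rho>2_def by blast
  have m1: "cmod \<mu>1 = cmod lam" unfolding \<mu>1_def by (rule th(3))
  have m2: "cmod \<mu>2 = cmod lam" unfolding \<mu>2_def using th(3) unfolding cmod_muf by simp
  have sin0: "sin \<theta> \<noteq> 0" using sin_gt_zero[OF th(1) th(2)] by simp
  have m12: "\<mu>1 \<noteq> \<mu>2"
  proof
    assume "\<mu>1 = \<mu>2"
    then have "Im \<mu>1 = Im \<mu>2" by simp
    then have "a2 * sin \<theta> = 0" unfolding \<mu>1_def \<mu>2_def muf_eq by simp
    then show False using a2_ne sin0 by simp
  qed
  have mu0: "\<mu>1 \<noteq> 0" "\<mu>2 \<noteq> 0" using m1 m2 lam0 by auto
  have u1: "cmod (lam / \<mu>1) = 1" "cmod (lam / \<mu>2) = 1" using m1 m2 lam0 by (simp_all add: norm_divide)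
  define K1 where "K1 = C1 * (Q + 1) * (\<Sum>n. 1 / (1 + real n) ^ 2)"
  define K2 where "K2 = C2 * (Q + 1) * (\<Sum>n. 1 / (1 + real n) ^ 2)"
  define S where "S k \<phi> = (lam / \<mu>1) ^ k * pr g1' \<phi> + (lam / \<mu>2) ^ k * pr g2' \<phi>" for k \<phi>
  have Sbd: "cmod (S k \<phi>) \<le> (K1 + K2) * nu q p 2 \<phi>" if ph: "\<phi> \<in> Sp q p" for k \<phi>
  proof -
    have "cmod (S k \<phi>) \<le> cmod ((lam / \<mu>1) ^ k * pr g1' \<phi>) + cmod ((lam / \<mu>2) ^ k * pr g2' \<phi>)"
      unfolding S_def by (rule norm_triangle_ineq)
    also have "\<dots> = cmod (pr g1' \<phi>) + cmod (pr g2' \<phi>)" by (simp add: norm_mult norm_power u1)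
    also have "\<dots> \<le> K1 * nu q p 2 \<phi> + K2 * nu q p 2 \<phi>"
      unfolding K1_def K2_def by (intro add_mono pr_bound[OF G1(1) ph] pr_bound[OF G2(1) ph])
    finally show ?thesis by (simp add: algebra_simps)
  qed
  have Slin: "\<forall>f\<in>Sp q p. \<forall>g\<in>Sp q p. \<forall>c. S k (\<lambda>x. f x + g x) = S k f + S k g \<and> S k (\<lambda>x. c * f x) = c * S k f" for k
    unfolding S_def
    by (auto simp: pr_add[OF G1(1)] pr_add[OF G2(1)] pr_scale[OF G1(1)] pr_scale[OF G2(1)] algebra_simps)
  have Slap: "S k (lap q \<phi>) = \<mu>1 * (lam / \<mu>1) ^ k * pr g1' \<phi> + \<mu>2 * (lam / \<mu>2) ^ k * pr g2' \<phi>" if ph: "\<phi> \<in> Sp q p" for k \<phi>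
    unfolding S_def pr_lap[OF G1(1) ph G1(3) G1(4)] pr_lap[OF G2(1) ph G2(3) G2(4)] by simp
  have sc: "seq_cond q p lam S"
    unfolding seq_cond_def
  proof (intro conjI allI impI ballI)
    fix k :: nat show "tempered q p (S k)" by (rule tempered_of_bound[OF Slin Sbd])
  next
    fix k :: nat and \<phi> assume k: "1 \<le> k" and ph: "\<phi> \<in> Sp q p"
    then obtain j where j: "k = Suc j" by (cases k) auto
    have e: "\<mu> * (lam / \<mu>) ^ Suc j = lam * (lam / \<mu>) ^ j" if "\<mu> \<noteq> 0" for \<mu>
      using that by (simp add: field_simps)
    show "S k (lap q \<phi>) = lam * S (k - 1) \<phi>"
      unfolding Slap[OF ph] j using e[OF mu0(1)] e[OF mu0(2)] by (simp add: S_def algebra_simps)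
  next
    show "\<exists>M>0. \<exists>m. \<forall>\<phi>\<in>Sp q p. \<forall>k. cmod (S k \<phi>) \<le> M * nu q p m \<phi>"
    proof (intro exI conjI ballI allI)
      show "K1 + K2 + 1 > 0"
      proof -
        have C1: "C1 \<ge> 0" using order_trans[OF norm_ge_zero G1(1)[of 0]] Q_gt1 by simp
        have C2: "C2 \<ge> 0" using order_trans[OF norm_ge_zero G2(1)[of 0]] Q_gt1 by simp
        have s0: "(\<Sum>n. 1 / (1 + real n) ^ 2) \<ge> 0" by (rule suminf_nonneg[OF summ_sq]) simp
        have "K1 \<ge> 0" "K2 \<ge> 0" unfolding K1_def K2_def using C1 C2 s0 Q_gt1 by simp_all
        then show ?thesis by simp
      qed
      fix \<phi> k assume ph: "\<phi> \<in> Sp q p"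
      have "cmod (S k \<phi>) \<le> (K1 + K2) * nu q p 2 \<phi>" by (rule Sbd[OF ph])
      also have "\<dots> \<le> (K1 + K2 + 1) * nu q p 2 \<phi>" using nu_nonneg[OF ph] by (intro mult_right_mono) auto
      finally show "cmod (S k \<phi>) \<le> (K1 + K2 + 1) * nu q p 2 \<phi>" .
    qed
  qed
  have notE: "\<not> eigendist q p (S 0)"
  proof
    assume "eigendist q p (S 0)"
    then obtain c where c: "\<And>\<phi>. \<phi> \<in> Sp q p \<Longrightarrow> S 0 (lap q \<phi>) = c * S 0 \<phi>" unfolding eigendist_def by blast
    have d0: "dlt [] \<in> Sp q p" by (rule dlt_Sp[OF root_V])
    have d1: "dlt [0] \<in> Sp q p" by (rule dlt_Sp[OF zero_V])
    have g11: "g1' 1 = 1 - \<mu>1" using G1(2) G1(3) by (simp add: algebra_simps)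
    have g21: "g2' 1 = 1 - \<mu>2" using G2(2) G2(3) by (simp add: algebra_simps)
    have e1: "\<mu>1 + \<mu>2 = c * 2"
      using c[OF d0] unfolding Slap[OF d0] unfolding S_def pr_dlt[OF root_V] using G1(2) G2(2) by simp
    have e2: "\<mu>1 * (1 - \<mu>1) + \<mu>2 * (1 - \<mu>2) = c * ((1 - \<mu>1) + (1 - \<mu>2))"
      using c[OF d1] unfolding Slap[OF d1] unfolding S_def pr_dlt[OF zero_V] using g11 g21 by simp
    have "(\<mu>1 - \<mu>2) ^ 2 = (\<mu>1 + \<mu>2) * (2 - \<mu>1 - \<mu>2) - 2 * (\<mu>1 * (1 - \<mu>1) + \<mu>2 * (1 - \<mu>2))"
      by (simp add: algebra_simps power2_eq_square)
    also have "\<dots> = c * 2 * (2 - \<mu>1 - \<mu>2) - 2 * (c * ((1 - \<mu>1) + (1 - \<mu>2)))" unfolding e1 e2 ..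
    also have "\<dots> = 0" by (simp add: algebra_simps)
    finally have "\<mu>1 = \<mu>2" by simp
    then show False using m12 by simp
  qed
  show ?thesis using sc notE by blast
qed

end

theorem lemmaB2:
  fixes q :: nat and p :: real and lam :: complex
    and T :: "nat \<Rightarrow> (nat list \<Rightarrow> complex) \<Rightarrow> complex"
  assumes "q \<ge> 2" and "1 < p" and "p < 2"
    and "lam \<noteq> 0"
    and "seq_cond q p lam T"
  shows "(cmod lam = Re (gamma_fn q (of_real (tau q / 2) + \<i> * of_real (delta (conj_exp p))))
            \<longrightarrow> (\<forall>\<phi>\<in>Sp q p. T 0 (lap q \<phi>) = of_real (cmod lam) * T 0 \<phi>))
       \<and> (cmod lam > Re (gamma_fn q (of_real (tau q / 2) + \<i> * of_real (delta (conj_exp p))))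
            \<longrightarrow> (\<forall>k. \<forall>\<phi>\<in>Sp q p. T k \<phi> = 0))
       \<and> (Re (gamma_fn q (of_real (tau q / 2) + \<i> * of_real (delta (conj_exp p)))) > cmod lam
          \<and> cmod lam > Re (gamma_fn q (\<i> * of_real (delta (conj_exp p))))
            \<longrightarrow> (\<exists>S. seq_cond q p lam S \<and> \<not> eigendist q p (S 0)))"
proof -
  interpret tp q p using assms(1-3) by unfold_locales
  show ?thesis
    unfolding gamma_top gamma_bot
    using partA[OF assms(5)] partB[OF assms(5)] partC[OF assms(4)]
    by (auto simp: gam_def)
qed


end
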